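(* Let $T:=12$, $U:=\mathcal{L}^2([0,T];\mathbb{R})\times\mathcal{L}^2([0,T];\mathbb{R})$, and $K_2:=\{(u_1,u_2)\in U:|u_1(t)|\le0.8,\ |u_2(t)|\le0.4\ \forall t\in[0,T]\}$. For $u=(u_1,u_2)\in U$ and $t\in[0,T]$ let $G_3(u)(t):=\pi/2+0.2\int_0^t\int_0^r(u_1(s)-u_2(s))\,ds\,dr$, and define $h=(h_1,\ldots,h_6):U\to\mathbb{R}^6$ by \[ \begin{aligned} h_1(u)&:=-10+\int_0^T\!\!\int_0^r(u_1(s)+u_2(s))\cos G_3(u)(s)\,ds\,dr, & h_2(u)&:=-10+\int_0^T\!\!\int_0^r(u_1(s)+u_2(s))\sin G_3(u)(s)\,ds\,dr,\\ h_3(u)&:=G_3(u)(T), & h_4(u)&:=\int_0^T(u_1(s)+u_2(s))\cos G_3(u)(s)\,ds,\\ h_5(u)&:=\int_0^T(u_1(s)+u_2(s))\sin G_3(u)(s)\,ds, & h_6(u)&:=0.2\int_0^T(u_1(s)-u_2(s))\,ds. \end{aligned} \] Then for every $z\in\mathbb{R}^6$ the set $K_2\cap h^{-1}(z)=\{u\in K_2:h(u)=z\}$ is weakly compact and hence weakly closed in $U$.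
   Context: The function $h$ encodes the free-flying robot dynamics: $h(u)=0$ iff the system $\dot x_1=x_4,\dot x_2=x_5,\dot x_3=x_6,\dot x_4=(u_1+u_2)\cos x_3,\dot x_5=(u_1+u_2)\sin x_3,\dot x_6=0.2(u_1-u_2)$ with $x(0)=(-10,-10,\pi/2,0,0,0)$ has $x(12)=0$. Weak compactness refers to the weak topology of the Hilbert space $U$; box constraints hold for (almost) every $t$. *)

theory Defs
  imports "HOL-Analysis.Analysis"
begin

text \<open>Representatives equal a.e. are not identified; all notions below only depend on the
  a.e.-class, so the weak topology below is the pullback of the weak topology of the
  Hilbert space U.\<close>

definition T_hor :: real where "T_hor = 12"

type_synonym ctrl = "(real \<Rightarrow> real) \<times> (real \<Rightarrow> real)"

definition sq_int :: "(real \<Rightarrow> real) \<Rightarrow> bool" where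
  "sq_int f \<longleftrightarrow> f measurable_on {0..T_hor} \<and> (\<lambda>t. (f t)^2) integrable_on {0..T_hor}"

definition U_space :: "ctrl set" where
  "U_space = {u. sq_int (fst u) \<and> sq_int (snd u)}"

definition ipU :: "ctrl \<Rightarrow> ctrl \<Rightarrow> real" where
  "ipU u v = integral {0..T_hor} (\<lambda>t. fst u t * fst v t + snd u t * snd v t)"

definition weak_topU :: "ctrl topology" where
  "weak_topU = pullback_topology U_space (\<lambda>u. restrict (\<lambda>v. ipU u v) U_space)
                 (product_topology (\<lambda>_. euclideanreal) U_space)"

definition K2 :: "ctrl set" where
  "K2 = {u \<in> U_space. AE t in lebesgue_on {0..T_hor}. \<bar>fst u t\<bar> \<le> 0.8 \<and> \<bar>snd u t\<bar> \<le> 0.4}"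

definition G3 :: "ctrl \<Rightarrow> real \<Rightarrow> real" where
  "G3 u t = pi/2 + 0.2 * integral {0..t} (\<lambda>r. integral {0..r} (\<lambda>s. fst u s - snd u s))"

definition h_map :: "ctrl \<Rightarrow> real^6" where
  "h_map u = vector
    [ -10 + integral {0..T_hor} (\<lambda>r. integral {0..r} (\<lambda>s. (fst u s + snd u s) * cos (G3 u s))),
      -10 + integral {0..T_hor} (\<lambda>r. integral {0..r} (\<lambda>s. (fst u s + snd u s) * sin (G3 u s))),
      G3 u T_hor,
      integral {0..T_hor} (\<lambda>s. (fst u s + snd u s) * cos (G3 u s)),
      integral {0..T_hor} (\<lambda>s. (fst u s + snd u s) * sin (G3 u s)),
      0.2 * integral {0..T_hor} (\<lambda>s. fst u s - snd u s) ]"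

end

theory Submission
  imports Defs
begin

lemma abstract_weak_compact:
  fixes A :: "'a set" and ip :: "'a \<Rightarrow> 'a \<Rightarrow> real" and S :: "'a set" and B :: "'a \<Rightarrow> real"
  assumes SA: "S \<subseteq> A"
    and bnd: "\<And>u v. u \<in> S \<Longrightarrow> v \<in> A \<Longrightarrow> \<bar>ip u v\<bar> \<le> B v"
    and clo: "\<And>L. (\<And>J e. finite J \<Longrightarrow> J \<subseteq> A \<Longrightarrow> e > 0 \<Longrightarrow> \<exists>w\<in>S. \<forall>v\<in>J. \<bar>ip w v - L v\<bar> < e)
               \<Longrightarrow> \<exists>u\<in>S. \<forall>v\<in>A. ip u v = L v"
    and sat: "\<And>x u. x \<in> A \<Longrightarrow> u \<in> S \<Longrightarrow> (\<forall>v\<in>A. ip x v = ip u v) \<Longrightarrow> x \<in> S"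
  shows "compactin (pullback_topology A (\<lambda>u. restrict (\<lambda>v. ip u v) A) (product_topology (\<lambda>_. euclideanreal) A)) S
       \<and> closedin (pullback_topology A (\<lambda>u. restrict (\<lambda>v. ip u v) A) (product_topology (\<lambda>_. euclideanreal) A)) S"
proof -
  define \<Phi> where "\<Phi> = (\<lambda>u. restrict (\<lambda>v. ip u v) A)"
  define P where "P = product_topology (\<lambda>_::'a. euclideanreal) A"
  define C where "C = \<Phi> ` S"
  have topP: "topspace P = PiE A (\<lambda>_. UNIV)" unfolding P_def by simp
  have CP: "C \<subseteq> topspace P" unfolding C_def \<Phi>_def topP by auto
  have opn: "openin P (topspace P - C)"
    unfolding P_def openin_product_topology_alt
  proof (intro ballI)
    fix L assume L: "L \<in> topspace (product_topology (\<lambda>_. euclideanreal) A) - C"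
    then have LC: "L \<notin> C" and LE: "L \<in> PiE A (\<lambda>_. UNIV)" by auto
    have "\<not> (\<forall>J e. finite J \<longrightarrow> J \<subseteq> A \<longrightarrow> e > 0 \<longrightarrow> (\<exists>w\<in>S. \<forall>v\<in>J. \<bar>ip w v - L v\<bar> < e))"
    proof
      assume H: "\<forall>J e. finite J \<longrightarrow> J \<subseteq> A \<longrightarrow> e > 0 \<longrightarrow> (\<exists>w\<in>S. \<forall>v\<in>J. \<bar>ip w v - L v\<bar> < e)"
      have "\<exists>u\<in>S. \<forall>v\<in>A. ip u v = L v"
      proof (rule clo)
        fix J e assume "finite J" "J \<subseteq> A" "0 < (e::real)"
        then show "\<exists>w\<in>S. \<forall>v\<in>J. \<bar>ip w v - L v\<bar> < e" using H by blast
      qed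
      then obtain u where u: "u \<in> S" "\<forall>v\<in>A. ip u v = L v" by blast
      have "\<Phi> u = L" using u LE unfolding \<Phi>_def by (auto simp: PiE_def extensional_def)
      then show False using u LC unfolding C_def by blast
    qed
    then obtain J e where J: "finite J" "J \<subseteq> A" "e > 0" and nw: "\<And>w. w \<in> S \<Longrightarrow> \<exists>v\<in>J. \<bar>ip w v - L v\<bar> \<ge> e"
      by (meson not_less)
    define U where "U = (\<lambda>i. if i \<in> J then ball (L i) e else (UNIV::real set))"
    show "\<exists>U. finite {i \<in> A. U i \<noteq> topspace euclideanreal} \<and> (\<forall>i\<in>A. openin euclideanreal (U i)) \<and>
             L \<in> Pi\<^sub>E A U \<and> Pi\<^sub>E A U \<subseteq> topspace (product_topology (\<lambda>_. euclideanreal) A) - C"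
    proof (intro exI[of _ U] conjI)
      show "finite {i \<in> A. U i \<noteq> topspace euclideanreal}"
        by (rule finite_subset[OF _ J(1)]) (auto simp: U_def)
      show "\<forall>i\<in>A. openin euclideanreal (U i)" by (auto simp: U_def)
      show "L \<in> Pi\<^sub>E A U" using LE J(3) by (auto simp: U_def PiE_def Pi_def)
      show "Pi\<^sub>E A U \<subseteq> topspace (product_topology (\<lambda>_. euclideanreal) A) - C"
      proof
        fix f assume f: "f \<in> Pi\<^sub>E A U"
        have "f \<notin> C"
        proof
          assume "f \<in> C"
          then obtain w where w: "w \<in> S" "f = \<Phi> w" unfolding C_def by auto
          obtain v where v: "v \<in> J" "\<bar>ip w v - L v\<bar> \<ge> e" using nw[OF w(1)] by blast
          have "f v \<in> ball (L v) e" using f v J(2) by (auto simp: U_def PiE_def Pi_def)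
          moreover have "f v = ip w v" using w v J(2) by (auto simp: \<Phi>_def)
          ultimately show False using v by (auto simp: dist_real_def abs_minus_commute)
        qed
        then show "f \<in> topspace (product_topology (\<lambda>_. euclideanreal) A) - C"
          using f by (auto simp: PiE_def)
      qed
    qed
  qed
  have Ccl: "closedin P C" using CP opn by (simp add: closedin_def)
  have Ccp: "compactin P C"
  proof (rule closed_compactin[OF _ _ Ccl])
    show "compactin P (PiE A (\<lambda>v. {-B v..B v}))" unfolding P_def
      by (simp add: compactin_PiE)
    show "C \<subseteq> PiE A (\<lambda>v. {-B v..B v})" unfolding C_def \<Phi>_def
      using bnd SA by (fastforce simp: abs_le_iff)
  qed
  let ?W = "pullback_topology A \<Phi> P"
  have topW: "topspace ?W = A" by (auto simp: topspace_pullback_topology topP \<Phi>_def)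
  have cW: "compactin ?W S"
    unfolding compactin_def
  proof (intro conjI allI impI)
    show "S \<subseteq> topspace ?W" using topW SA by simp
    fix \<U> assume U: "Ball \<U> (openin ?W) \<and> S \<subseteq> \<Union> \<U>"
    then have "\<forall>X\<in>\<U>. \<exists>V. openin P V \<and> X = \<Phi> -` V \<inter> A" by (simp add: openin_pullback_topology)
    then obtain V where V: "\<And>X. X \<in> \<U> \<Longrightarrow> openin P (V X) \<and> X = \<Phi> -` (V X) \<inter> A" by metis
    have "C \<subseteq> \<Union> (V ` \<U>)"
    proof
      fix y assume "y \<in> C" then obtain u where u: "u \<in> S" "y = \<Phi> u" unfolding C_def by auto
      then obtain X where "X \<in> \<U>" "u \<in> X" using U by auto
      then show "y \<in> \<Union> (V ` \<U>)" using V u by auto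
    qed
    then obtain \<F> where F: "finite \<F>" "\<F> \<subseteq> V ` \<U>" "C \<subseteq> \<Union>\<F>"
      using Ccp V unfolding compactin_def by (metis (no_types, lifting) image_iff)
    then obtain \<G> where G: "\<G> \<subseteq> \<U>" "finite \<G>" "\<F> = V ` \<G>" by (meson finite_subset_image)
    show "\<exists>\<F>. finite \<F> \<and> \<F> \<subseteq> \<U> \<and> S \<subseteq> \<Union> \<F>"
    proof (intro exI[of _ \<G>] conjI G(1,2))
      show "S \<subseteq> \<Union> \<G>"
      proof
        fix u assume u: "u \<in> S"
        then have "\<Phi> u \<in> C" unfolding C_def by auto
        then obtain X where X: "X \<in> \<G>" "\<Phi> u \<in> V X" using F G by auto
        then have "u \<in> X" using V[of X] G u SA by auto
        then show "u \<in> \<Union> \<G>" using X by auto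
      qed
    qed
  qed
  have clW: "closedin ?W S"
  proof -
    have eq: "topspace ?W - S = \<Phi> -` (topspace P - C) \<inter> A"
    proof
      show "topspace ?W - S \<subseteq> \<Phi> -` (topspace P - C) \<inter> A"
      proof
        fix x assume "x \<in> topspace ?W - S"
        then have x: "x \<in> A" "x \<notin> S" using topW by auto
        have "\<Phi> x \<in> topspace P" using x by (auto simp: topP \<Phi>_def)
        moreover have "\<Phi> x \<notin> C"
        proof
          assume "\<Phi> x \<in> C" then obtain u where u: "u \<in> S" "\<Phi> x = \<Phi> u" unfolding C_def by auto
          then have "\<forall>v\<in>A. ip x v = ip u v" unfolding \<Phi>_def by (metis restrict_apply')
          then show False using sat[OF x(1) u(1)] x by blast
        qed
        ultimately show "x \<in> \<Phi> -` (topspace P - C) \<inter> A" using x by auto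
      qed
      show "\<Phi> -` (topspace P - C) \<inter> A \<subseteq> topspace ?W - S"
      proof
        fix x assume x: "x \<in> \<Phi> -` (topspace P - C) \<inter> A"
        then have "\<Phi> x \<notin> C" by auto
        then have "x \<notin> S" unfolding C_def by auto
        then show "x \<in> topspace ?W - S" using x topW by auto
      qed
    qed
    have "openin ?W (topspace ?W - S)"
      unfolding eq openin_pullback_topology using opn by blast
    then show ?thesis unfolding closedin_def using topW SA by simp
  qed
  show ?thesis using cW clW unfolding \<Phi>_def P_def by simp
qed


abbreviation II :: "real set" where "II \<equiv> {0..T_hor}"

lemma II_sets [simp]: "II \<in> sets lebesgue" by simp
lemma II_lmeas [simp]: "II \<in> lmeasurable" by simp
lemma T_pos [simp]: "0 < T_hor" "0 \<le> T_hor" by (auto simp: T_hor_def)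

lemma sq_int_iff: "sq_int f \<longleftrightarrow> f \<in> borel_measurable (lebesgue_on II) \<and> (\<lambda>t. (f t)^2) integrable_on II"
  unfolding sq_int_def by (simp add: measurable_on_iff_borel_measurable)

lemma sq_int_meas: "sq_int f \<Longrightarrow> f \<in> borel_measurable (lebesgue_on II)"
  by (simp add: sq_int_iff)

lemma sq_int_bounded:
  assumes "f \<in> borel_measurable (lebesgue_on II)" "\<And>t. t \<in> II \<Longrightarrow> \<bar>f t\<bar> \<le> M"
  shows "sq_int f"
proof -
  have m2: "(\<lambda>t. (f t)^2) \<in> borel_measurable (lebesgue_on II)" using assms(1) by measurable
  have "(\<lambda>t. (f t)^2) integrable_on II"
  proof (rule measurable_bounded_by_integrable_imp_integrable_real[OF m2 _ _ II_sets])
    show "(\<lambda>t. M^2) integrable_on II" by (simp add: integrable_on_const)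
    fix t assume "t \<in> II"
    then have "\<bar>f t\<bar> \<le> M" using assms(2) by auto
    then have "(f t)^2 \<le> M^2" by (metis abs_ge_zero power2_abs power_mono)
    then show "\<bar>(f t)^2\<bar> \<le> M^2" by simp
  qed
  then show ?thesis using assms(1) by (simp add: sq_int_iff)
qed

lemma abs_prod_le_sq: "\<bar>x * y\<bar> \<le> x^2 + (y::real)^2"
proof -
  have "0 \<le> (\<bar>x\<bar> - \<bar>y\<bar>)^2" by simp
  then have "2 * (\<bar>x\<bar> * \<bar>y\<bar>) \<le> x^2 + y^2"
    by (simp add: power2_eq_square algebra_simps)
  moreover have "0 \<le> \<bar>x\<bar> * \<bar>y\<bar>" by simp
  ultimately have "\<bar>x\<bar> * \<bar>y\<bar> \<le> x^2 + y^2" by linarith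
  then show ?thesis by (simp add: abs_mult)
qed

lemma integrable_cmult_real: "f integrable_on S \<Longrightarrow> (\<lambda>x. c * f x) integrable_on S"
  for f :: "_ \<Rightarrow> real"
  using integrable_on_cmult_left[of f S c] by simp

lemma sq_int_lin:
  assumes "sq_int f" "sq_int g"
  shows "sq_int (\<lambda>t. a * f t + b * g t)"
proof -
  have mf: "f \<in> borel_measurable (lebesgue_on II)" and mg: "g \<in> borel_measurable (lebesgue_on II)"
    using assms by (auto simp: sq_int_iff)
  have m: "(\<lambda>t. a * f t + b * g t) \<in> borel_measurable (lebesgue_on II)" using mf mg by measurable
  have m2: "(\<lambda>t. (a * f t + b * g t)^2) \<in> borel_measurable (lebesgue_on II)" using m by measurable
  have i: "(\<lambda>t. 2 * a^2 * (f t)^2 + 2 * b^2 * (g t)^2) integrable_on II"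
    using assms by (auto simp: sq_int_def intro!: integrable_add integrable_cmult_real)
  have "(\<lambda>t. (a * f t + b * g t)^2) integrable_on II"
  proof (rule measurable_bounded_by_integrable_imp_integrable_real[OF m2 i _ II_sets])
    fix t
    have "0 \<le> (a * f t - b * g t)^2" by simp
    then have "(a * f t + b * g t)^2 \<le> 2 * a^2 * (f t)^2 + 2 * b^2 * (g t)^2"
      by (simp add: power2_eq_square algebra_simps)
    then show "\<bar>(a * f t + b * g t)^2\<bar> \<le> 2 * a^2 * (f t)^2 + 2 * b^2 * (g t)^2" by simp
  qed
  then show ?thesis using m by (simp add: sq_int_iff)
qed

lemma sq_int_prod:
  assumes "sq_int f" "sq_int g"
  shows "(\<lambda>t. f t * g t) absolutely_integrable_on II"
proof -
  have mf: "f \<in> borel_measurable (lebesgue_on II)" and mg: "g \<in> borel_measurable (lebesgue_on II)"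
    using assms by (auto simp: sq_int_iff)
  have m: "(\<lambda>t. f t * g t) \<in> borel_measurable (lebesgue_on II)" using mf mg by measurable
  have i: "(\<lambda>t. (f t)^2 + (g t)^2) integrable_on II"
    using assms by (auto simp: sq_int_def intro!: integrable_add)
  show ?thesis
  proof (rule measurable_bounded_by_integrable_imp_absolutely_integrable[OF m II_sets i])
    fix t
    show "norm (f t * g t) \<le> (f t)^2 + (g t)^2" by (simp add: abs_prod_le_sq)
  qed
qed

lemma sq_int_one: "sq_int (\<lambda>t. 1)"
  by (rule sq_int_bounded[where M=1]) auto

lemma sq_int_absint:
  assumes "sq_int f" shows "f absolutely_integrable_on II"
  using sq_int_prod[OF assms sq_int_one] by simp

lemma sq_int_int: "sq_int f \<Longrightarrow> f integrable_on II"
  using sq_int_absint set_lebesgue_integral_eq_integral(1) by blast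

lemma sq_int_prod_int: "sq_int f \<Longrightarrow> sq_int g \<Longrightarrow> (\<lambda>t. f t * g t) integrable_on II"
  using sq_int_prod set_lebesgue_integral_eq_integral(1) by blast

lemma sq_int_absint_abs: "sq_int f \<Longrightarrow> (\<lambda>t. \<bar>f t\<bar>) integrable_on II"
proof -
  assume "sq_int f"
  then have "(\<lambda>x. norm (f x)) integrable_on II" using sq_int_absint absolutely_integrable_on_def by blast
  then show ?thesis by simp
qed

lemma integral_ae_bound:
  fixes f g :: "real \<Rightarrow> real"
  assumes "negligible N" "\<And>t. t \<in> S - N \<Longrightarrow> \<bar>f t\<bar> \<le> g t" "f integrable_on S" "g integrable_on S"
  shows "\<bar>integral S f\<bar> \<le> integral S g"
proof -
  define f' where "f' = (\<lambda>t. if t \<in> N then 0 else f t)"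
  define g' where "g' = (\<lambda>t. if t \<in> N then 0 else g t)"
  have e1: "integral S f = integral S f'" by (rule integral_spike[OF assms(1)]) (auto simp: f'_def)
  have e2: "integral S g = integral S g'" by (rule integral_spike[OF assms(1)]) (auto simp: g'_def)
  have i1: "f' integrable_on S" by (rule integrable_spike[OF assms(3) assms(1)]) (auto simp: f'_def)
  have i2: "g' integrable_on S" by (rule integrable_spike[OF assms(4) assms(1)]) (auto simp: g'_def)
  have "norm (integral S f') \<le> integral S g'"
    by (rule integral_norm_bound_integral[OF i1 i2]) (use assms(2) in \<open>auto simp: f'_def g'_def\<close>)
  then show ?thesis using e1 e2 by simp
qed

lemma K2_ae:
  assumes "u \<in> K2"
  obtains N where "negligible N" "\<And>t. t \<in> II - N \<Longrightarrow> \<bar>fst u t\<bar> \<le> 0.8 \<and> \<bar>snd u t\<bar> \<le> 0.4"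
proof -
  have "AE t in lebesgue_on II. \<bar>fst u t\<bar> \<le> 0.8 \<and> \<bar>snd u t\<bar> \<le> 0.4" using assms by (simp add: K2_def)
  then have "AE t in lebesgue. t \<in> II \<longrightarrow> \<bar>fst u t\<bar> \<le> 0.8 \<and> \<bar>snd u t\<bar> \<le> 0.4"
    using AE_restrict_space_iff[of II lebesgue "\<lambda>t. \<bar>fst u t\<bar> \<le> 0.8 \<and> \<bar>snd u t\<bar> \<le> 0.4"] by simp
  then obtain N where "negligible N" "{t. \<not> (t \<in> II \<longrightarrow> \<bar>fst u t\<bar> \<le> 0.8 \<and> \<bar>snd u t\<bar> \<le> 0.4)} \<subseteq> N"
    by (auto simp: eventually_ae_filter_negligible)
  then show ?thesis using that by blast
qed

lemma vector6_nth:
  "vector [a1,a2,a3,a4,a5,a6] $ (1::6) = a1"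
  "vector [a1,a2,a3,a4,a5,a6] $ (2::6) = a2"
  "vector [a1,a2,a3,a4,a5,a6] $ (3::6) = a3"
  "vector [a1,a2,a3,a4,a5,a6] $ (4::6) = a4"
  "vector [a1,a2,a3,a4,a5,a6] $ (5::6) = a5"
  "vector [a1,a2,a3,a4,a5,a6] $ (6::6) = a6"
  unfolding vector_def vec_lambda_beta by simp_all

lemma exhaust_6:
  fixes x :: 6
  shows "x = 1 \<or> x = 2 \<or> x = 3 \<or> x = 4 \<or> x = 5 \<or> x = 6"
proof (induct x)
  case (of_int z)
  then have "z = 0 \<or> z = 1 \<or> z = 2 \<or> z = 3 \<or> z = 4 \<or> z = 5" by fastforce
  then show ?case by auto
qed

lemma vector6_eq:
  fixes z :: "'a::zero^6"
  assumes "z $ 1 = a1" "z $ 2 = a2" "z $ 3 = a3" "z $ 4 = a4" "z $ 5 = a5" "z $ 6 = a6"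
  shows "z = vector [a1,a2,a3,a4,a5,a6]"
proof -
  have "\<forall>i::6. z $ i = vector [a1,a2,a3,a4,a5,a6] $ i"
  proof
    fix i :: 6
    show "z $ i = vector [a1,a2,a3,a4,a5,a6] $ i"
      using exhaust_6[of i] assms by (auto simp: vector6_nth)
  qed
  then show ?thesis by (simp add: vec_eq_iff)
qed


lemma integral_cmult_real: "integral S (\<lambda>x. c * f x) = c * integral S f"
  for f :: "real \<Rightarrow> real"
  using integral_cmul[of S c f] by simp

lemma sq_int_bm: "f \<in> borel_measurable lebesgue \<Longrightarrow> (\<And>t. \<bar>f t\<bar> \<le> M) \<Longrightarrow> sq_int f"
  by (rule sq_int_bounded[where M=M]) (auto intro: measurable_restrict_space1)

lemma sq_int_indicator: "A \<in> sets lebesgue \<Longrightarrow> sq_int (indicator A)"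
  by (rule sq_int_bm[where M=1]) (auto simp: indicator_def)

lemma sq_int_zero: "sq_int (\<lambda>t. 0)"
  by (rule sq_int_bm[where M=0]) auto

lemma sq_int_add: "sq_int f \<Longrightarrow> sq_int g \<Longrightarrow> sq_int (\<lambda>t. f t + g t)"
  using sq_int_lin[of f g 1 1] by simp

lemma sq_int_diff: "sq_int f \<Longrightarrow> sq_int g \<Longrightarrow> sq_int (\<lambda>t. f t - g t)"
  using sq_int_lin[of f g 1 "-1"] by simp

lemma sq_int_cmult: "sq_int f \<Longrightarrow> sq_int (\<lambda>t. a * f t)"
  using sq_int_lin[of f f a 0] by simp

lemma sq_int_sum: "finite F \<Longrightarrow> (\<And>i. i \<in> F \<Longrightarrow> sq_int (f i)) \<Longrightarrow> sq_int (\<lambda>t. \<Sum>i\<in>F. f i t)"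
proof (induction F rule: finite_induct)
  case empty then show ?case using sq_int_zero by simp
next
  case (insert x F) then show ?case using sq_int_add[of "f x" "\<lambda>t. \<Sum>i\<in>F. f i t"] by simp
qed

locale bfun =
  fixes \<Lambda> :: "(real \<Rightarrow> real) \<Rightarrow> real" and C :: real
  assumes C_nonneg: "0 \<le> C"
    and lin: "\<And>f g a b. sq_int f \<Longrightarrow> sq_int g \<Longrightarrow> \<Lambda> (\<lambda>t. a * f t + b * g t) = a * \<Lambda> f + b * \<Lambda> g"
    and bnd: "\<And>f. sq_int f \<Longrightarrow> \<bar>\<Lambda> f\<bar> \<le> C * integral II (\<lambda>t. \<bar>f t\<bar>)"
begin

lemma zero: "\<Lambda> (\<lambda>t. 0) = 0"
  using lin[OF sq_int_one sq_int_one, of 0 0] by simp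

lemma add: "sq_int f \<Longrightarrow> sq_int g \<Longrightarrow> \<Lambda> (\<lambda>t. f t + g t) = \<Lambda> f + \<Lambda> g"
  using lin[of f g 1 1] by simp

lemma diff: "sq_int f \<Longrightarrow> sq_int g \<Longrightarrow> \<Lambda> (\<lambda>t. f t - g t) = \<Lambda> f - \<Lambda> g"
  using lin[of f g 1 "-1"] by simp

lemma scale: "sq_int f \<Longrightarrow> \<Lambda> (\<lambda>t. a * f t) = a * \<Lambda> f"
  using lin[of f f a 0] by simp

lemma sum: "finite F \<Longrightarrow> (\<And>i. i \<in> F \<Longrightarrow> sq_int (f i)) \<Longrightarrow> \<Lambda> (\<lambda>t. \<Sum>i\<in>F. f i t) = (\<Sum>i\<in>F. \<Lambda> (f i))"
proof (induction F rule: finite_induct)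
  case empty then show ?case using zero by simp
next
  case (insert x F)
  have "\<Lambda> (\<lambda>t. \<Sum>i\<in>insert x F. f i t) = \<Lambda> (\<lambda>t. f x t + (\<Sum>i\<in>F. f i t))"
    using insert by simp
  also have "\<dots> = \<Lambda> (f x) + \<Lambda> (\<lambda>t. \<Sum>i\<in>F. f i t)"
    using insert by (intro add sq_int_sum) auto
  finally show ?case using insert by simp
qed

lemma cong:
  assumes "sq_int f" "sq_int g" "negligible N" "\<And>t. t \<in> II - N \<Longrightarrow> f t = g t"
  shows "\<Lambda> f = \<Lambda> g"
proof -
  have "\<bar>\<Lambda> (\<lambda>t. f t - g t)\<bar> \<le> C * integral II (\<lambda>t. \<bar>f t - g t\<bar>)"
    using bnd sq_int_diff assms by blast
  also have "integral II (\<lambda>t. \<bar>f t - g t\<bar>) = integral II (\<lambda>t. 0)"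
    by (rule integral_spike[OF assms(3)]) (use assms(4) in auto)
  finally show ?thesis using diff[OF assms(1,2)] by simp
qed

lemma dct:
  assumes s: "\<And>n. sq_int (s n)" and f: "sq_int f" and h: "h integrable_on II"
    and le: "\<And>n t. t \<in> II \<Longrightarrow> \<bar>s n t\<bar> \<le> h t"
    and lim: "\<And>t. t \<in> II \<Longrightarrow> (\<lambda>n. s n t) \<longlonglongrightarrow> f t"
  shows "(\<lambda>n. \<Lambda> (s n)) \<longlonglongrightarrow> \<Lambda> f"
proof -
  define k where "k = (\<lambda>n t. \<bar>s n t - f t\<bar>)"
  have ki: "k n integrable_on II" for n
    unfolding k_def by (rule sq_int_absint_abs[OF sq_int_diff[OF s f]])
  have hf: "(\<lambda>t. h t + \<bar>f t\<bar>) integrable_on II"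
    by (rule integrable_add[OF h sq_int_absint_abs[OF f]])
  have kle: "norm (k n t) \<le> h t + \<bar>f t\<bar>" if "t \<in> II" for n t
    using le[OF that, of n] by (auto simp: k_def)
  have klim: "(\<lambda>n. k n t) \<longlonglongrightarrow> 0" if "t \<in> II" for t
  proof -
    have "(\<lambda>n. s n t - f t) \<longlonglongrightarrow> 0" using lim[OF that] by (simp add: LIM_zero)
    then have "(\<lambda>n. \<bar>s n t - f t\<bar>) \<longlonglongrightarrow> \<bar>0\<bar>" by (rule tendsto_rabs)
    then show ?thesis by (simp add: k_def)
  qed
  have "(\<lambda>n. integral II (k n)) \<longlonglongrightarrow> integral II (\<lambda>t. 0)"
    by (rule dominated_convergence(2)[OF ki hf kle klim])
  then have I0: "(\<lambda>n. integral II (k n)) \<longlonglongrightarrow> 0" by simp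
  have "(\<lambda>n. \<Lambda> (s n) - \<Lambda> f) \<longlonglongrightarrow> 0"
  proof (rule Lim_null_comparison)
    show "\<forall>\<^sub>F n in sequentially. norm (\<Lambda> (s n) - \<Lambda> f) \<le> C * integral II (k n)"
    proof (rule always_eventually, rule allI)
      fix n
      have "\<bar>\<Lambda> (\<lambda>t. s n t - f t)\<bar> \<le> C * integral II (k n)"
        unfolding k_def by (rule bnd[OF sq_int_diff[OF s f]])
      then show "norm (\<Lambda> (s n) - \<Lambda> f) \<le> C * integral II (k n)" using diff[OF s f] by simp
    qed
    show "(\<lambda>n. C * integral II (k n)) \<longlonglongrightarrow> 0"
      using tendsto_mult_right_zero[OF I0, of C] by simp
  qed
  then show ?thesis by (rule LIM_zero_cancel)
qed

lemma sums_indicator: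
  assumes A: "range A \<subseteq> sets lebesgue" and dis: "disjoint_family A"
  shows "(\<lambda>i. \<Lambda> (indicator (A i))) sums \<Lambda> (indicator (\<Union>i. A i))"
proof -
  have Ai: "A i \<in> sets lebesgue" for i using A by auto
  have Bn: "(\<Union>i<n. A i) \<in> sets lebesgue" for n using Ai by auto
  have UA: "(\<Union>i. A i) \<in> sets lebesgue" using Ai by auto
  have ps: "(\<Sum>i<n. \<Lambda> (indicator (A i))) = \<Lambda> (indicator (\<Union>i<n. A i))" for n
  proof -
    have "(\<lambda>t. \<Sum>i<n. indicator (A i) t) = (indicator (\<Union>i<n. A i) :: real \<Rightarrow> real)"
    proof
      fix t
      show "(\<Sum>i<n. indicator (A i) t) = (indicator (\<Union>i<n. A i) t :: real)"
      proof -
        have "indicator (\<Union>(A ` {..<n})) t = (\<Sum>y<n. indicator (A y) t :: real)"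
          by (rule indicator_UN_disjoint) (simp_all add: disjoint_family_on_mono[OF subset_UNIV dis])
        then show ?thesis by simp
      qed
    qed
    moreover have "\<Lambda> (\<lambda>t. \<Sum>i<n. indicator (A i) t) = (\<Sum>i<n. \<Lambda> (indicator (A i)))"
      by (rule sum) (auto intro: sq_int_indicator Ai)
    ultimately show ?thesis by simp
  qed
  have "(\<lambda>n. \<Lambda> (indicator (\<Union>i<n. A i))) \<longlonglongrightarrow> \<Lambda> (indicator (\<Union>i. A i))"
  proof (rule dct[where h="\<lambda>t. 1"])
    show "sq_int (indicator (\<Union>i<n. A i))" for n by (rule sq_int_indicator[OF Bn])
    show "sq_int (indicator (\<Union>i. A i))" by (rule sq_int_indicator[OF UA])
    show "(\<lambda>t. 1::real) integrable_on II" by (simp add: integrable_on_const)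
    show "\<bar>indicator (\<Union>i<n. A i) t\<bar> \<le> (1::real)" for n t by (simp add: indicator_def)
    show "(\<lambda>n. indicator (\<Union>i<n. A i) t :: real) \<longlonglongrightarrow> indicator (\<Union>i. A i) t" for t
      by (rule LIMSEQ_indicator_UN)
  qed
  then show ?thesis unfolding sums_def ps .
qed

lemma zero_functional:
  assumes ind: "\<And>A. A \<in> sets lebesgue \<Longrightarrow> \<Lambda> (indicator A) = 0"
    and f: "sq_int f"
  shows "\<Lambda> f = 0"
proof -
  define f0 where "f0 = (\<lambda>t. indicator II t * f t)"
  have fm: "f \<in> borel_measurable (lebesgue_on II)" using f by (rule sq_int_meas)
  have f0m: "f0 \<in> borel_measurable lebesgue"
    unfolding f0_def using fm borel_measurable_restrict_space_iff[of II lebesgue f] by simp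
  obtain F where F: "\<And>i. simple_function lebesgue (F i)"
    "\<And>x. (\<lambda>i. F i x) \<longlonglongrightarrow> f0 x" "\<And>i x. dist (F i x) 0 \<le> 2 * dist (f0 x) 0"
    using borel_measurable_implies_sequence_metric[OF f0m, of 0] by auto
  have Fsq: "sq_int (F i)" for i
  proof -
    have fin: "finite (range (F i))" using simple_functionD(1)[OF F(1)[of i]] by simp
    obtain M where "\<forall>y\<in>range (F i). \<bar>y\<bar> \<le> M"
      using finite_imp_bounded[OF fin] by (meson bounded_real)
    then show ?thesis
      by (intro sq_int_bm[where M=M] borel_measurable_simple_function[OF F(1)]) auto
  qed
  have FD: "\<Lambda> (F i) = 0" for i
  proof -
    define R where "R = range (F i)"
    have fin: "finite R" using simple_functionD(1)[OF F(1)[of i]] by (simp add: R_def)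
    have pre: "F i -` {y} \<in> sets lebesgue" for y
      using simple_functionD(2)[OF F(1)[of i], of "{y}"] by simp
    have rep: "F i = (\<lambda>t. \<Sum>y\<in>R. y * indicator (F i -` {y}) t)"
    proof
      fix t
      have "(\<Sum>y\<in>R. y * indicator (F i -` {y}) t) = (\<Sum>y\<in>R. if y = F i t then y else 0)"
        by (rule sum.cong) (auto simp: indicator_def)
      also have "\<dots> = F i t" using fin by (simp add: R_def)
      finally show "F i t = (\<Sum>y\<in>R. y * indicator (F i -` {y}) t)" by simp
    qed
    have "\<Lambda> (\<lambda>t. \<Sum>y\<in>R. y * indicator (F i -` {y}) t) = (\<Sum>y\<in>R. \<Lambda> (\<lambda>t. y * indicator (F i -` {y}) t))"
      by (rule sum[OF fin]) (auto intro: sq_int_cmult sq_int_indicator pre)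
    also have "\<dots> = 0"
      by (rule sum.neutral) (auto simp: scale[OF sq_int_indicator[OF pre]] ind[OF pre])
    finally show ?thesis using rep by metis
  qed
  have sf0: "sq_int f0"
  proof -
    have "f0 \<in> borel_measurable (lebesgue_on II)" using f0m by (rule measurable_restrict_space1)
    moreover have "(\<lambda>t. (f0 t)^2) integrable_on II"
    proof (rule integrable_eq)
      show "(\<lambda>t. (f t)^2) integrable_on II" using f by (simp add: sq_int_def)
    qed (simp add: f0_def)
    ultimately show ?thesis by (simp add: sq_int_iff)
  qed
  have "(\<lambda>i. \<Lambda> (F i)) \<longlonglongrightarrow> \<Lambda> f0"
  proof (rule dct[OF Fsq sf0])
    show "(\<lambda>t. 2 * \<bar>f0 t\<bar>) integrable_on II" using sq_int_absint_abs[OF sf0] by (rule integrable_cmult_real)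
    show "\<bar>F n t\<bar> \<le> 2 * \<bar>f0 t\<bar>" for n t using F(3)[of n t] by (simp add: dist_real_def)
    show "(\<lambda>n. F n t) \<longlonglongrightarrow> f0 t" for t by (rule F(2))
  qed
  then have "\<Lambda> f0 = 0" using FD by (simp add: LIMSEQ_const_iff)
  moreover have "\<Lambda> f = \<Lambda> f0"
    by (rule cong[OF f sf0, of "{}"]) (auto simp: f0_def)
  ultimately show ?thesis by simp
qed

end


lemma sigma_finite_lebesgue: "sigma_finite_measure (lebesgue :: real measure)"
proof
  show "\<exists>A. countable A \<and> A \<subseteq> sets (lebesgue::real measure) \<and> \<Union> A = space lebesgue \<and> (\<forall>a\<in>A. emeasure lebesgue a \<noteq> \<infinity>)"
  proof (intro exI[of _ "range (\<lambda>n::nat. {-real n..real n})"] conjI)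
    show "\<Union> (range (\<lambda>n::nat. {-real n..real n})) = space lebesgue"
    proof (auto)
      fix x :: real
      obtain n :: nat where "\<bar>x\<bar> \<le> real n" using real_arch_simple by blast
      then show "\<exists>n::nat. - real n \<le> x \<and> x \<le> real n" by (intro exI[of _ n]) auto
    qed
  qed auto
qed

lemma bm_abs_int:
  assumes "g \<in> borel_measurable lebesgue" "\<And>t. \<bar>g t\<bar> \<le> c" "sq_int f"
  shows "(\<lambda>t. g t * f t) integrable_on II" "\<bar>integral II (\<lambda>t. g t * f t)\<bar> \<le> c * integral II (\<lambda>t. \<bar>f t\<bar>)"
proof -
  have sg: "sq_int g" using sq_int_bm assms(1,2) by blast
  show i: "(\<lambda>t. g t * f t) integrable_on II" by (rule sq_int_prod_int[OF sg assms(3)])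
  have "norm (integral II (\<lambda>t. g t * f t)) \<le> integral II (\<lambda>t. c * \<bar>f t\<bar>)"
  proof (rule integral_norm_bound_integral[OF i])
    show "(\<lambda>t. c * \<bar>f t\<bar>) integrable_on II" by (rule integrable_cmult_real[OF sq_int_absint_abs[OF assms(3)]])
    fix t show "norm (g t * f t) \<le> c * \<bar>f t\<bar>"
      using assms(2)[of t] by (simp add: abs_mult mult_right_mono)
  qed
  then show "\<bar>integral II (\<lambda>t. g t * f t)\<bar> \<le> c * integral II (\<lambda>t. \<bar>f t\<bar>)"
    by (simp add: integral_cmult_real)
qed

lemma riesz_box:
  assumes "bfun \<Lambda> c"
  shows "\<exists>g. g \<in> borel_measurable lebesgue \<and> (\<forall>t. \<bar>g t\<bar> \<le> c) \<and>
             (\<forall>f. sq_int f \<longrightarrow> \<Lambda> f = integral II (\<lambda>t. g t * f t))"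
proof -
  interpret bfun \<Lambda> c by fact
  define \<Lambda>' where "\<Lambda>' = (\<lambda>f. \<Lambda> f + c * integral II f)"
  have intlin: "integral II (\<lambda>t. a * f t + b * g t) = a * integral II f + b * integral II g"
    if "sq_int f" "sq_int g" for f g a b
  proof -
    have "integral II (\<lambda>t. a * f t + b * g t) = integral II (\<lambda>t. a * f t) + integral II (\<lambda>t. b * g t)"
      by (rule integral_add[OF integrable_cmult_real[OF sq_int_int[OF that(1)]] integrable_cmult_real[OF sq_int_int[OF that(2)]]])
    then show ?thesis by (simp add: integral_cmult_real)
  qed
  interpret L': bfun \<Lambda>' "2 * c"
  proof
    show "0 \<le> 2 * c" using C_nonneg by simp
    fix f g a b assume "sq_int f" "sq_int g"
    then show "\<Lambda>' (\<lambda>t. a * f t + b * g t) = a * \<Lambda>' f + b * \<Lambda>' g"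
      unfolding \<Lambda>'_def using lin intlin by (simp add: algebra_simps)
  next
    fix f assume f: "sq_int f"
    have "\<bar>integral II f\<bar> \<le> integral II (\<lambda>t. \<bar>f t\<bar>)"
      using integral_norm_bound_integral[OF sq_int_int[OF f] sq_int_absint_abs[OF f]] by simp
    then have "c * \<bar>integral II f\<bar> \<le> c * integral II (\<lambda>t. \<bar>f t\<bar>)" using C_nonneg by (rule mult_left_mono)
    then show "\<bar>\<Lambda>' f\<bar> \<le> 2 * c * integral II (\<lambda>t. \<bar>f t\<bar>)"
    proof -
      have "\<bar>c * integral II f\<bar> = c * \<bar>integral II f\<bar>" using C_nonneg by (simp add: abs_mult)
      moreover have "\<bar>\<Lambda> f + c * integral II f\<bar> \<le> \<bar>\<Lambda> f\<bar> + \<bar>c * integral II f\<bar>" by (rule abs_triangle_ineq)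
      ultimately show ?thesis unfolding \<Lambda>'_def using bnd[OF f] \<open>c * \<bar>integral II f\<bar> \<le> c * integral II (\<lambda>t. \<bar>f t\<bar>)\<close> by linarith
    qed
  qed
  have ind_abs: "(\<lambda>t. \<bar>indicator A t :: real\<bar>) = indicator A" for A by (auto simp: indicator_def)
  have int_ind: "integral II (indicator A :: real \<Rightarrow> real) \<ge> 0" if "A \<in> sets lebesgue" for A
    by (rule Henstock_Kurzweil_Integration.integral_nonneg[OF sq_int_int[OF sq_int_indicator[OF that]]]) (simp add: indicator_def)
  have pos: "0 \<le> \<Lambda>' (indicator A)" if A: "A \<in> sets lebesgue" for A
  proof -
    have "\<bar>\<Lambda> (indicator A)\<bar> \<le> c * integral II (indicator A)"
      using bnd[OF sq_int_indicator[OF A]] by (simp add: ind_abs)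
    then show ?thesis unfolding \<Lambda>'_def by linarith
  qed
  define \<mu> where "\<mu> = (\<lambda>A. ennreal (\<Lambda>' (indicator A)))"
  have sa: "sigma_algebra UNIV (sets (lebesgue :: real measure))"
    using sets.sigma_algebra_axioms[of lebesgue] by simp
  have posi: "positive (sets lebesgue) \<mu>"
    unfolding positive_def \<mu>_def using L'.zero by (simp add: indicator_def[abs_def])
  have ca: "countably_additive (sets lebesgue) \<mu>"
    unfolding countably_additive_def
  proof (intro allI impI)
    fix A :: "nat \<Rightarrow> real set"
    assume A: "range A \<subseteq> sets lebesgue" and dis: "disjoint_family A" and "\<Union> (range A) \<in> sets lebesgue"
    have s: "(\<lambda>i. \<Lambda>' (indicator (A i))) sums \<Lambda>' (indicator (\<Union>i. A i))"
      by (rule L'.sums_indicator[OF A dis])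
    have "(\<Sum>i. \<mu> (A i)) = ennreal (\<Sum>i. \<Lambda>' (indicator (A i)))"
      unfolding \<mu>_def using s A pos by (intro suminf_ennreal2) (auto simp: sums_iff)
    also have "\<dots> = \<mu> (\<Union> (range A))" unfolding \<mu>_def using s by (simp add: sums_iff)
    finally show "(\<Sum>i. \<mu> (A i)) = \<mu> (\<Union> (range A))" .
  qed
  define \<nu> where "\<nu> = measure_of UNIV (sets lebesgue) \<mu>"
  have em\<nu>: "emeasure \<nu> A = \<mu> A" if "A \<in> sets lebesgue" for A
    unfolding \<nu>_def by (rule emeasure_measure_of_sigma[OF sa posi ca that])
  have sets\<nu>: "sets \<nu> = sets lebesgue"
    unfolding \<nu>_def using sigma_algebra.sigma_sets_eq[OF sa] by (simp add: sets_measure_of)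
  have ac: "absolutely_continuous lebesgue \<nu>"
    unfolding absolutely_continuous_def
  proof
    fix A :: "real set" assume A: "A \<in> null_sets lebesgue"
    then have As: "A \<in> sets lebesgue" by auto
    have negl: "negligible A" using A by (simp add: negligible_iff_null_sets)
    have "\<Lambda>' (indicator A) = \<Lambda>' (\<lambda>t. 0)"
      by (rule L'.cong[OF sq_int_indicator[OF As] sq_int_zero negl]) (auto simp: indicator_def)
    then have "\<mu> A = 0" using L'.zero by (simp add: \<mu>_def)
    then show "A \<in> null_sets \<nu>" using em\<nu>[OF As] As sets\<nu> by (simp add: null_sets_def)
  qed
  obtain f where fm: "f \<in> borel_measurable lebesgue" and fd: "density lebesgue f = \<nu>"
    using sigma_finite_measure.Radon_Nikodym[OF sigma_finite_lebesgue ac sets\<nu>] by blast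
  note fm[measurable]
  have pII[measurable]: "Measurable.pred lebesgue (\<lambda>x. x \<in> II)" unfolding pred_def by simp
  have key: "(\<integral>\<^sup>+x. f x * indicator A x \<partial>lebesgue) = ennreal (\<Lambda>' (indicator A))"
    if A: "A \<in> sets lebesgue" for A
    using emeasure_density[OF fm A] fd em\<nu>[OF A] by (simp add: \<mu>_def)

  have out: "AE x in lebesgue. x \<notin> II \<longrightarrow> f x = 0"
  proof -
    have cs: "- II \<in> sets lebesgue" by simp
    have "\<Lambda>' (indicator (- II)) = \<Lambda>' (\<lambda>t. 0)"
      by (rule L'.cong[OF sq_int_indicator[OF cs] sq_int_zero, of "{}"]) (auto simp: indicator_def)
    then have e: "(\<integral>\<^sup>+x. f x * indicator (- II) x \<partial>lebesgue) = 0" using key[OF cs] L'.zero by simp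
    have m: "(\<lambda>x. f x * indicator (- II) x) \<in> borel_measurable lebesgue" using fm cs by measurable
    have "AE x in lebesgue. f x * indicator (- II) x = 0"
      using nn_integral_0_iff_AE[OF m] e by blast
    then show ?thesis by eventually_elim (auto simp: indicator_def)
  qed
  have bd: "AE x in lebesgue. x \<in> II \<longrightarrow> f x \<le> ennreal (2*c)"
  proof -
    define A where "A = {x. ennreal (2*c) < f x} \<inter> II"
    have "{x \<in> space lebesgue. ennreal (2*c) < f x} \<in> sets lebesgue" using fm by measurable
    then have As: "A \<in> sets lebesgue" unfolding A_def using sets.Int[OF _ II_sets] by simp
    have AII: "A \<subseteq> II" unfolding A_def by auto
    have Al: "A \<in> lmeasurable"
    proof -
      have "II \<inter> {x. ennreal (2*c) < f x} \<in> lmeasurable"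
        by (rule fmeasurable_Int_fmeasurable) (use \<open>{x \<in> space lebesgue. ennreal (2*c) < f x} \<in> sets lebesgue\<close> in auto)
      then show ?thesis unfolding A_def by (simp add: Int_commute)
    qed
    have intA: "integral II (indicator A) = measure lebesgue A"
      using integral_indicator[of A II] Al AII by (simp add: Int_absorb2)
    have "A \<in> null_sets lebesgue"
    proof (rule ccontr)
      assume nn: "A \<notin> null_sets lebesgue"
      define F1 where "F1 = (\<lambda>x. ennreal (2*c * indicator A x))"
      define F2 where "F2 = (\<lambda>x. f x * indicator A x)"
      have hi: "((\<lambda>x. 2*c * indicator A x) has_integral (2*c * measure lebesgue A)) UNIV"
        using Al lmeasurable_iff_has_integral has_integral_mult_right by blast
      have F1i: "(\<integral>\<^sup>+x. F1 x \<partial>lebesgue) = ennreal (2*c * measure lebesgue A)"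
        using hi has_integral_iff_nn_integral_lebesgue[of "\<lambda>x. 2*c * indicator A x"] C_nonneg
        unfolding F1_def by (simp add: indicator_def)
      have F1m: "F1 \<in> borel_measurable lebesgue" unfolding F1_def using As by measurable
      have F2m: "F2 \<in> borel_measurable lebesgue" unfolding F2_def using As fm by measurable
      have "(\<integral>\<^sup>+x. F1 x \<partial>lebesgue) < (\<integral>\<^sup>+x. F2 x \<partial>lebesgue)"
      proof (rule nn_integral_less[OF F1m F2m])
        show "(\<integral>\<^sup>+x. F1 x \<partial>lebesgue) \<noteq> \<infinity>" using F1i by simp
        show "AE x in lebesgue. F1 x \<le> F2 x"
          by (rule AE_I2) (auto simp: F1_def F2_def A_def indicator_def less_imp_le)
        show "\<not> (AE x in lebesgue. F2 x \<le> F1 x)"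
        proof
          assume "AE x in lebesgue. F2 x \<le> F1 x"
          then have "AE x in lebesgue. x \<notin> A"
            by eventually_elim (auto simp: F1_def F2_def A_def indicator_def)
          then show False using nn AE_iff_null_sets[OF As] by blast
        qed
      qed
      also have "(\<integral>\<^sup>+x. F2 x \<partial>lebesgue) = ennreal (\<Lambda>' (indicator A))" unfolding F2_def by (rule key[OF As])
      also have "\<dots> \<le> ennreal (2*c * measure lebesgue A)"
        using L'.bnd[OF sq_int_indicator[OF As]] intA by (simp add: ind_abs ennreal_leI)
      finally show False using F1i by simp
    qed
    then have "AE x in lebesgue. x \<notin> A" using AE_iff_null_sets[OF As] by blast
    then show ?thesis by eventually_elim (auto simp: A_def not_less)
  qed
  define g where "g = (\<lambda>x. if x \<in> II \<and> f x \<le> ennreal (2*c) then enn2real (f x) - c else 0)"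
  have gm: "g \<in> borel_measurable lebesgue" unfolding g_def using fm by measurable
  have gb: "\<bar>g x\<bar> \<le> c" for x
  proof (cases "x \<in> II \<and> f x \<le> ennreal (2*c)")
    case True
    then have "enn2real (f x) \<le> 2*c" using C_nonneg by (intro enn2real_leI) auto
    moreover have "0 \<le> enn2real (f x)" by simp
    moreover have gx: "g x = enn2real (f x) - c" unfolding g_def using True by (rule if_P)
    ultimately show ?thesis unfolding gx abs_le_iff by linarith
  next
    case False
    have "g x = 0" unfolding g_def using False by (rule if_not_P)
    then show ?thesis using C_nonneg by simp
  qed
  have rep: "integral II (\<lambda>t. g t * indicator A t) = \<Lambda> (indicator A)" if A: "A \<in> sets lebesgue" for A
  proof -
    define F where "F = (\<lambda>x. (g x + c) * indicator (A \<inter> II) x)"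
    have Fnn: "0 \<le> F x" for x using gb[of x] by (auto simp: F_def indicator_def)
    have Fm: "F \<in> borel_measurable lebesgue" unfolding F_def using gm A by measurable
    have "AE x in lebesgue. f x * indicator A x = ennreal (F x)"
      using out bd
    proof eventually_elim
      case (elim x)
      show ?case
      proof (cases "x \<in> II")
        case True
        then have fx: "f x \<le> ennreal (2*c)" using elim by auto
        then have "f x < top" using ennreal_less_top[of "2*c"] by (rule le_less_trans)
        then have "ennreal (enn2real (f x)) = f x" by simp
        then show ?thesis using True fx by (auto simp: F_def g_def indicator_def)
      next
        case False then show ?thesis using elim by (simp add: F_def)
      qed
    qed
    then have "(\<integral>\<^sup>+x. ennreal (F x) \<partial>lebesgue) = ennreal (\<Lambda>' (indicator A))"
      using key[OF A] nn_integral_cong_AE by metis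
    then have "(F has_integral \<Lambda>' (indicator A)) UNIV"
      using has_integral_iff_nn_integral_lebesgue[of F] Fnn Fm pos[OF A] by simp
    then have e1: "integral UNIV F = \<Lambda>' (indicator A)" by (rule integral_unique)
    have e2: "integral UNIV F = integral II (\<lambda>t. (g t + c) * indicator A t)"
    proof -
      have "F = (\<lambda>x. if x \<in> II then (g x + c) * indicator A x else 0)"
        by (auto simp: F_def indicator_def)
      then show ?thesis using Henstock_Kurzweil_Integration.integral_restrict_Int[of UNIV II "\<lambda>t. (g t + c) * indicator A t"]
        by simp
    qed
    have e3: "integral II (\<lambda>t. (g t + c) * indicator A t) = integral II (\<lambda>t. g t * indicator A t) + c * integral II (indicator A)"
    proof -
      have "integral II (\<lambda>t. (g t + c) * indicator A t) = integral II (\<lambda>t. g t * indicator A t + c * indicator A t)"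
        by (simp add: algebra_simps)
      also have "\<dots> = integral II (\<lambda>t. g t * indicator A t) + integral II (\<lambda>t. c * indicator A t)"
        by (rule integral_add[OF bm_abs_int(1)[OF gm gb sq_int_indicator[OF A]]
              integrable_cmult_real[OF sq_int_int[OF sq_int_indicator[OF A]]]])
      finally show ?thesis by (simp add: integral_cmult_real)
    qed
    show ?thesis using e1 e2 e3 unfolding \<Lambda>'_def by simp
  qed
  define D where "D = (\<lambda>h. \<Lambda> h - integral II (\<lambda>t. g t * h t))"
  interpret D: bfun D "2 * c"
  proof
    show "0 \<le> 2 * c" using C_nonneg by simp
    fix h1 h2 a b assume h: "sq_int h1" "sq_int h2"
    have "integral II (\<lambda>t. g t * (a * h1 t + b * h2 t)) = integral II (\<lambda>t. a * (g t * h1 t) + b * (g t * h2 t))"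
      by (simp add: algebra_simps)
    also have "\<dots> = integral II (\<lambda>t. a * (g t * h1 t)) + integral II (\<lambda>t. b * (g t * h2 t))"
      by (rule integral_add[OF integrable_cmult_real[OF bm_abs_int(1)[OF gm gb h(1)]]
            integrable_cmult_real[OF bm_abs_int(1)[OF gm gb h(2)]]])
    finally have "integral II (\<lambda>t. g t * (a * h1 t + b * h2 t)) =
        a * integral II (\<lambda>t. g t * h1 t) + b * integral II (\<lambda>t. g t * h2 t)"
      by (simp add: integral_cmult_real)
    then show "D (\<lambda>t. a * h1 t + b * h2 t) = a * D h1 + b * D h2"
      unfolding D_def using lin[OF h] by (simp add: algebra_simps)
  next
    fix h assume h: "sq_int h"
    show "\<bar>D h\<bar> \<le> 2 * c * integral II (\<lambda>t. \<bar>h t\<bar>)"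
      unfolding D_def using bnd[OF h] bm_abs_int(2)[OF gm gb h] by linarith
  qed
  have "D h = 0" if "sq_int h" for h
    by (rule D.zero_functional[OF _ that]) (simp add: D_def rep)
  then show ?thesis using gm gb by (intro exI[of _ g]) (auto simp: D_def)
qed


lemma U_iff: "u \<in> U_space \<longleftrightarrow> sq_int (fst u) \<and> sq_int (snd u)"
  by (simp add: U_space_def)

lemma K2_U: "u \<in> K2 \<Longrightarrow> u \<in> U_space"
  by (simp add: K2_def)

lemma negl_AE:
  assumes "negligible N" "\<And>t. t \<in> II - N \<Longrightarrow> P t"
  shows "AE t in lebesgue_on II. P t"
proof -
  have "AE t in lebesgue. t \<in> II \<longrightarrow> P t"
    unfolding eventually_ae_filter_negligible using assms by (intro exI[of _ N]) auto
  then show ?thesis using AE_restrict_space_iff[of II lebesgue P] by simp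
qed

lemma nonneg_int_zero:
  fixes f :: "real \<Rightarrow> real"
  assumes fi: "f integrable_on II" and nn: "\<And>t. t \<in> II \<Longrightarrow> 0 \<le> f t" and z: "integral II f = 0"
  obtains N where "negligible N" "\<And>t. t \<in> II - N \<Longrightarrow> f t = 0"
proof -
  have ai: "f absolutely_integrable_on II" by (rule nonnegative_absolutely_integrable_1[OF fi nn])
  then have m: "f \<in> borel_measurable (lebesgue_on II)" and ia: "integrable (lebesgue_on II) (\<lambda>x. \<bar>f x\<bar>)"
    using absolutely_integrable_measurable_real[of II f] by auto
  have i: "integrable (lebesgue_on II) f" using ia integrable_abs_iff[OF m] by simp
  have "integral\<^sup>L (lebesgue_on II) f = 0" using lebesgue_integral_eq_integral[OF i II_sets] z by simp
  moreover have "AE x in lebesgue_on II. 0 \<le> f x"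
    by (rule AE_I2) (use nn in auto)
  ultimately have "AE x in lebesgue_on II. f x = 0" using integral_nonneg_eq_0_iff_AE[OF i] by simp
  then have "AE x in lebesgue. x \<in> II \<longrightarrow> f x = 0" using AE_restrict_space_iff[of II lebesgue] by simp
  then obtain N where "negligible N" "{x. \<not> (x \<in> II \<longrightarrow> f x = 0)} \<subseteq> N"
    by (auto simp: eventually_ae_filter_negligible)
  then show ?thesis using that by blast
qed

lemma ipU_int: "u \<in> U_space \<Longrightarrow> v \<in> U_space \<Longrightarrow> (\<lambda>t. fst u t * fst v t + snd u t * snd v t) integrable_on II"
  by (auto simp: U_iff intro!: integrable_add sq_int_prod_int)

lemma ae_eq_h:
  assumes N: "negligible N" and eq: "\<And>t. t \<in> II - N \<Longrightarrow> fst x t = fst u t \<and> snd x t = snd u t"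
  shows "h_map x = h_map u"
proof -
  have P: "integral {0..r} (\<lambda>s. fst x s - snd x s) = integral {0..r} (\<lambda>s. fst u s - snd u s)" if "r \<in> II" for r
    by (rule integral_spike[OF N]) (use eq that in auto)
  have G: "G3 x s = G3 u s" if "s \<in> II" for s
  proof -
    have "integral {0..s} (\<lambda>r. integral {0..r} (\<lambda>s. fst x s - snd x s)) = integral {0..s} (\<lambda>r. integral {0..r} (\<lambda>s. fst u s - snd u s))"
      by (rule integral_cong) (use P that in auto)
    then show ?thesis unfolding G3_def by simp
  qed
  have C: "integral {0..r} (\<lambda>s. (fst x s + snd x s) * trig (G3 x s)) = integral {0..r} (\<lambda>s. (fst u s + snd u s) * trig (G3 u s))"
    if "r \<in> II" for r and trig :: "real \<Rightarrow> real"
    by (rule integral_spike[OF N]) (use eq that G in auto)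
  have O: "integral II (\<lambda>r. integral {0..r} (\<lambda>s. (fst x s + snd x s) * trig (G3 x s))) =
        integral II (\<lambda>r. integral {0..r} (\<lambda>s. (fst u s + snd u s) * trig (G3 u s)))" for trig :: "real \<Rightarrow> real"
    by (rule integral_cong) (use C in auto)
  have T: "T_hor \<in> II" by simp
  show ?thesis unfolding h_map_def
    using O[of cos] O[of sin] C[OF T, of cos] C[OF T, of sin] P[OF T] G[OF T] by simp
qed

lemma saturation:
  assumes x: "x \<in> U_space" and u: "u \<in> K2" and eq: "\<forall>v\<in>U_space. ipU x v = ipU u v"
  shows "x \<in> K2 \<and> h_map x = h_map u"
proof -
  have uU: "u \<in> U_space" using u by (rule K2_U)
  define v where "v = ((\<lambda>t. fst x t - fst u t), (\<lambda>t. snd x t - snd u t))"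
  have vU: "v \<in> U_space" using x uU by (simp add: v_def U_iff sq_int_diff)
  have "ipU x v - ipU u v = integral II (\<lambda>t. (fst x t * fst v t + snd x t * snd v t) - (fst u t * fst v t + snd u t * snd v t))"
    unfolding ipU_def by (rule integral_diff[symmetric, OF ipU_int[OF x vU] ipU_int[OF uU vU]])
  also have "\<dots> = integral II (\<lambda>t. (fst x t - fst u t)^2 + (snd x t - snd u t)^2)"
    by (rule integral_cong) (simp add: v_def power2_eq_square algebra_simps)
  finally have z: "integral II (\<lambda>t. (fst x t - fst u t)^2 + (snd x t - snd u t)^2) = 0"
    using eq vU by simp
  have fi: "(\<lambda>t. (fst x t - fst u t)^2 + (snd x t - snd u t)^2) integrable_on II"
  proof -
    have "(\<lambda>t. (fst x t * fst v t + snd x t * snd v t) - (fst u t * fst v t + snd u t * snd v t)) integrable_on II"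
      by (rule integrable_diff[OF ipU_int[OF x vU] ipU_int[OF uU vU]])
    then show ?thesis by (rule integrable_eq) (simp add: v_def power2_eq_square algebra_simps)
  qed
  obtain N where N: "negligible N" and N0: "\<And>t. t \<in> II - N \<Longrightarrow> (fst x t - fst u t)^2 + (snd x t - snd u t)^2 = 0"
    using nonneg_int_zero[OF fi _ z] by auto
  have eqt: "fst x t = fst u t \<and> snd x t = snd u t" if "t \<in> II - N" for t
  proof -
    have "(fst x t - fst u t)^2 + (snd x t - snd u t)^2 = 0" using N0[OF that] .
    then have "(fst x t - fst u t)^2 = 0 \<and> (snd x t - snd u t)^2 = 0"
      by (smt (verit) zero_le_power2)
    then show ?thesis by simp
  qed
  obtain N' where N': "negligible N'" "\<And>t. t \<in> II - N' \<Longrightarrow> \<bar>fst u t\<bar> \<le> 0.8 \<and> \<bar>snd u t\<bar> \<le> 0.4"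
    using K2_ae[OF u] by blast
  have "AE t in lebesgue_on II. \<bar>fst x t\<bar> \<le> 0.8 \<and> \<bar>snd x t\<bar> \<le> 0.4"
    by (rule negl_AE[OF negligible_Un[OF N N'(1)]]) (use eqt N'(2) in auto)
  then have "x \<in> K2" using x by (simp add: K2_def)
  moreover have "h_map x = h_map u" by (rule ae_eq_h[OF N eqt])
  ultimately show ?thesis by blast
qed

lemma ip_bound:
  assumes u: "u \<in> K2" and v: "v \<in> U_space"
  shows "\<bar>ipU u v\<bar> \<le> integral II (\<lambda>t. \<bar>fst v t\<bar> + \<bar>snd v t\<bar>)"
proof -
  obtain N where N: "negligible N" "\<And>t. t \<in> II - N \<Longrightarrow> \<bar>fst u t\<bar> \<le> 0.8 \<and> \<bar>snd u t\<bar> \<le> 0.4"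
    using K2_ae[OF u] by blast
  show ?thesis unfolding ipU_def
  proof (rule integral_ae_bound[OF N(1)])
    fix t assume t: "t \<in> II - N"
    have "\<bar>fst u t * fst v t\<bar> \<le> \<bar>fst v t\<bar>"
      using N(2)[OF t] by (simp add: abs_mult mult_left_le_one_le)
    moreover have "\<bar>snd u t * snd v t\<bar> \<le> \<bar>snd v t\<bar>"
      using N(2)[OF t] by (simp add: abs_mult mult_left_le_one_le)
    ultimately show "\<bar>fst u t * fst v t + snd u t * snd v t\<bar> \<le> \<bar>fst v t\<bar> + \<bar>snd v t\<bar>" by linarith
  next
    show "(\<lambda>t. fst u t * fst v t + snd u t * snd v t) integrable_on II" by (rule ipU_int[OF K2_U[OF u] v])
  next
    show "(\<lambda>t. \<bar>fst v t\<bar> + \<bar>snd v t\<bar>) integrable_on II"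
      using v by (auto simp: U_iff intro!: integrable_add sq_int_absint_abs)
  qed
qed


lemma small_zero:
  fixes X K :: real
  assumes K: "0 \<le> K" and H: "\<And>e. 0 < e \<Longrightarrow> \<bar>X\<bar> \<le> K * e"
  shows "X = 0"
proof -
  have "\<bar>X\<bar> \<le> 0 + e" if e: "0 < e" for e
  proof -
    have "\<bar>X\<bar> \<le> K * (e / (K + 1))" using H[of "e / (K+1)"] e K by simp
    also have "\<dots> \<le> e" using K e by (simp add: field_simps)
    finally show ?thesis by simp
  qed
  then have "\<bar>X\<bar> \<le> 0" by (rule field_le_epsilon)
  then show ?thesis by simp
qed

lemma ipU_fst: "ipU w (f, \<lambda>t. 0) = integral II (\<lambda>t. fst w t * f t)"
  by (simp add: ipU_def)

lemma ipU_snd: "ipU w (\<lambda>t. 0, f) = integral II (\<lambda>t. snd w t * f t)"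
  by (simp add: ipU_def)

lemma int_lin2:
  assumes "sq_int w" "sq_int f" "sq_int g"
  shows "integral II (\<lambda>t. w t * (a * f t + b * g t)) = a * integral II (\<lambda>t. w t * f t) + b * integral II (\<lambda>t. w t * g t)"
proof -
  have "integral II (\<lambda>t. w t * (a * f t + b * g t)) = integral II (\<lambda>t. a * (w t * f t) + b * (w t * g t))"
    by (simp add: algebra_simps)
  also have "\<dots> = integral II (\<lambda>t. a * (w t * f t)) + integral II (\<lambda>t. b * (w t * g t))"
    by (rule integral_add[OF integrable_cmult_real[OF sq_int_prod_int[OF assms(1,2)]]
          integrable_cmult_real[OF sq_int_prod_int[OF assms(1,3)]]])
  finally show ?thesis by (simp add: integral_cmult_real)
qed

lemma int_bound_c:
  assumes "sq_int w" "sq_int f" "negligible N" "\<And>t. t \<in> II - N \<Longrightarrow> \<bar>w t\<bar> \<le> c"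
  shows "\<bar>integral II (\<lambda>t. w t * f t)\<bar> \<le> c * integral II (\<lambda>t. \<bar>f t\<bar>)"
proof -
  have "\<bar>integral II (\<lambda>t. w t * f t)\<bar> \<le> integral II (\<lambda>t. c * \<bar>f t\<bar>)"
  proof (rule integral_ae_bound[OF assms(3)])
    fix t assume "t \<in> II - N"
    then show "\<bar>w t * f t\<bar> \<le> c * \<bar>f t\<bar>" using assms(4) by (simp add: abs_mult mult_right_mono)
  qed (auto intro: sq_int_prod_int assms integrable_cmult_real[OF sq_int_absint_abs[OF assms(2)]])
  then show ?thesis by (simp add: integral_cmult_real)
qed

lemma closure_rep:
  assumes SK: "S \<subseteq> K2"
    and P: "\<And>J e. finite J \<Longrightarrow> J \<subseteq> U_space \<Longrightarrow> e > 0 \<Longrightarrow> \<exists>w\<in>S. \<forall>v\<in>J. \<bar>ipU w v - L v\<bar> < e"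
  shows "\<exists>u\<in>K2. \<forall>v\<in>U_space. ipU u v = L v"
proof -
  have approx3: "L v3 = a * L v1 + b * L v2"
    if v: "v1 \<in> U_space" "v2 \<in> U_space" "v3 \<in> U_space"
      and rel: "\<And>w. w \<in> K2 \<Longrightarrow> ipU w v3 = a * ipU w v1 + b * ipU w v2" for v1 v2 v3 a b
  proof -
    have "L v3 - (a * L v1 + b * L v2) = 0"
    proof (rule small_zero[where K="1 + \<bar>a\<bar> + \<bar>b\<bar>"])
      fix e :: real assume e: "0 < e"
      obtain w where w: "w \<in> S" and wJ: "\<forall>v\<in>{v1,v2,v3}. \<bar>ipU w v - L v\<bar> < e"
        using P[of "{v1,v2,v3}" e] v e by auto
      have "w \<in> K2" using w SK by auto
      then have r: "ipU w v3 = a * ipU w v1 + b * ipU w v2" by (rule rel)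
      have d: "L v3 - (a * L v1 + b * L v2) = (L v3 - ipU w v3) - a * (L v1 - ipU w v1) - b * (L v2 - ipU w v2)"
        using r by (simp add: algebra_simps)
      have e1: "\<bar>L v1 - ipU w v1\<bar> \<le> e" "\<bar>L v2 - ipU w v2\<bar> \<le> e" "\<bar>L v3 - ipU w v3\<bar> \<le> e"
        using wJ by (auto simp: abs_minus_commute less_imp_le)
      have a1: "\<bar>a * (L v1 - ipU w v1)\<bar> \<le> \<bar>a\<bar> * e" using e1(1) by (simp add: abs_mult mult_left_mono)
      have b1: "\<bar>b * (L v2 - ipU w v2)\<bar> \<le> \<bar>b\<bar> * e" using e1(2) by (simp add: abs_mult mult_left_mono)
      have "\<bar>(L v3 - ipU w v3) - a * (L v1 - ipU w v1) - b * (L v2 - ipU w v2)\<bar>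
            \<le> \<bar>L v3 - ipU w v3\<bar> + \<bar>a * (L v1 - ipU w v1)\<bar> + \<bar>b * (L v2 - ipU w v2)\<bar>"
        by (smt (verit))
      also have "\<dots> \<le> e + \<bar>a\<bar> * e + \<bar>b\<bar> * e" using e1(3) a1 b1 by linarith
      finally show "\<bar>L v3 - (a * L v1 + b * L v2)\<bar> \<le> (1 + \<bar>a\<bar> + \<bar>b\<bar>) * e"
        unfolding d by (simp add: algebra_simps)
    qed simp
    then show ?thesis by simp
  qed
  have approx_bound: "\<bar>L v\<bar> \<le> B" if v: "v \<in> U_space" and bd: "\<And>w. w \<in> K2 \<Longrightarrow> \<bar>ipU w v\<bar> \<le> B" for v B
  proof (rule field_le_epsilon)
    fix e :: real assume e: "0 < e"
    obtain w where w: "w \<in> S" and wJ: "\<forall>v'\<in>{v}. \<bar>ipU w v' - L v'\<bar> < e"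
      using P[of "{v}" e] v e by auto
    have "w \<in> K2" using w SK by auto
    then have "\<bar>ipU w v\<bar> \<le> B" by (rule bd)
    then show "\<bar>L v\<bar> \<le> B + e" using wJ by auto
  qed
  define \<Lambda>1 where "\<Lambda>1 = (\<lambda>f. L (f, \<lambda>t. 0))"
  define \<Lambda>2 where "\<Lambda>2 = (\<lambda>f. L (\<lambda>t. 0, f))"
  have b1: "bfun \<Lambda>1 0.8"
  proof
    fix f g a b assume fg: "sq_int f" "sq_int g"
    show "\<Lambda>1 (\<lambda>t. a * f t + b * g t) = a * \<Lambda>1 f + b * \<Lambda>1 g"
      unfolding \<Lambda>1_def
    proof (rule approx3)
      show "(f, \<lambda>t. 0) \<in> U_space" "(g, \<lambda>t. 0) \<in> U_space" "(\<lambda>t. a * f t + b * g t, \<lambda>t. 0) \<in> U_space"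
        using fg by (auto simp: U_iff sq_int_zero sq_int_lin)
      fix w assume w: "w \<in> K2"
      then have "sq_int (fst w)" using K2_U U_iff by blast
      then show "ipU w (\<lambda>t. a * f t + b * g t, \<lambda>t. 0) = a * ipU w (f, \<lambda>t. 0) + b * ipU w (g, \<lambda>t. 0)"
        unfolding ipU_fst using int_lin2 fg by blast
    qed
  next
    fix f assume f: "sq_int f"
    show "\<bar>\<Lambda>1 f\<bar> \<le> 0.8 * integral II (\<lambda>t. \<bar>f t\<bar>)"
      unfolding \<Lambda>1_def
    proof (rule approx_bound)
      show "(f, \<lambda>t. 0) \<in> U_space" using f by (auto simp: U_iff sq_int_zero)
      fix w assume w: "w \<in> K2"
      obtain N where N: "negligible N" "\<And>t. t \<in> II - N \<Longrightarrow> \<bar>fst w t\<bar> \<le> 0.8 \<and> \<bar>snd w t\<bar> \<le> 0.4"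
        using K2_ae[OF w] by blast
      show "\<bar>ipU w (f, \<lambda>t. 0)\<bar> \<le> 0.8 * integral II (\<lambda>t. \<bar>f t\<bar>)"
        unfolding ipU_fst using K2_U[OF w] f N by (intro int_bound_c) (auto simp: U_iff)
    qed
  qed simp
  have b2: "bfun \<Lambda>2 0.4"
  proof
    fix f g a b assume fg: "sq_int f" "sq_int g"
    show "\<Lambda>2 (\<lambda>t. a * f t + b * g t) = a * \<Lambda>2 f + b * \<Lambda>2 g"
      unfolding \<Lambda>2_def
    proof (rule approx3)
      show "(\<lambda>t. 0, f) \<in> U_space" "(\<lambda>t. 0, g) \<in> U_space" "(\<lambda>t. 0, \<lambda>t. a * f t + b * g t) \<in> U_space"
        using fg by (auto simp: U_iff sq_int_zero sq_int_lin)
      fix w assume w: "w \<in> K2"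
      then have "sq_int (snd w)" using K2_U U_iff by blast
      then show "ipU w (\<lambda>t. 0, \<lambda>t. a * f t + b * g t) = a * ipU w (\<lambda>t. 0, f) + b * ipU w (\<lambda>t. 0, g)"
        unfolding ipU_snd using int_lin2 fg by blast
    qed
  next
    fix f assume f: "sq_int f"
    show "\<bar>\<Lambda>2 f\<bar> \<le> 0.4 * integral II (\<lambda>t. \<bar>f t\<bar>)"
      unfolding \<Lambda>2_def
    proof (rule approx_bound)
      show "(\<lambda>t. 0, f) \<in> U_space" using f by (auto simp: U_iff sq_int_zero)
      fix w assume w: "w \<in> K2"
      obtain N where N: "negligible N" "\<And>t. t \<in> II - N \<Longrightarrow> \<bar>fst w t\<bar> \<le> 0.8 \<and> \<bar>snd w t\<bar> \<le> 0.4"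
        using K2_ae[OF w] by blast
      show "\<bar>ipU w (\<lambda>t. 0, f)\<bar> \<le> 0.4 * integral II (\<lambda>t. \<bar>f t\<bar>)"
        unfolding ipU_snd using K2_U[OF w] f N by (intro int_bound_c) (auto simp: U_iff)
    qed
  qed simp
  obtain g1 where g1: "g1 \<in> borel_measurable lebesgue" "\<And>t. \<bar>g1 t\<bar> \<le> 0.8"
      "\<And>f. sq_int f \<Longrightarrow> \<Lambda>1 f = integral II (\<lambda>t. g1 t * f t)"
    using riesz_box[OF b1] by blast
  obtain g2 where g2: "g2 \<in> borel_measurable lebesgue" "\<And>t. \<bar>g2 t\<bar> \<le> 0.4"
      "\<And>f. sq_int f \<Longrightarrow> \<Lambda>2 f = integral II (\<lambda>t. g2 t * f t)"
    using riesz_box[OF b2] by blast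
  define u where "u = (g1, g2)"
  have uU: "u \<in> U_space" unfolding u_def U_iff using sq_int_bm[OF g1(1,2)] sq_int_bm[OF g2(1,2)] by simp
  have uK: "u \<in> K2" unfolding K2_def using uU g1(2) g2(2) by (auto simp: u_def intro!: AE_I2)
  have "ipU u v = L v" if v: "v \<in> U_space" for v
  proof -
    have v12: "sq_int (fst v)" "sq_int (snd v)" using v by (auto simp: U_iff)
    have "L v = 1 * L (fst v, \<lambda>t. 0) + 1 * L (\<lambda>t. 0, snd v)"
    proof (rule approx3)
      show "(fst v, \<lambda>t. 0) \<in> U_space" "(\<lambda>t. 0, snd v) \<in> U_space" "v \<in> U_space"
        using v12 v by (auto simp: U_iff sq_int_zero)
      fix w assume w: "w \<in> K2"
      then have w12: "sq_int (fst w)" "sq_int (snd w)" using K2_U U_iff by auto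
      show "ipU w v = 1 * ipU w (fst v, \<lambda>t. 0) + 1 * ipU w (\<lambda>t. 0, snd v)"
        unfolding ipU_fst ipU_snd unfolding ipU_def
        by (simp add: integral_add sq_int_prod_int w12 v12)
    qed
    also have "\<dots> = integral II (\<lambda>t. g1 t * fst v t) + integral II (\<lambda>t. g2 t * snd v t)"
      using g1(3)[OF v12(1)] g2(3)[OF v12(2)] by (simp add: \<Lambda>1_def \<Lambda>2_def)
    also have "\<dots> = ipU u v"
      unfolding ipU_def u_def
      by (simp add: integral_add bm_abs_int(1)[OF g1(1,2) v12(1)] bm_abs_int(1)[OF g2(1,2) v12(2)])
    finally show ?thesis by simp
  qed
  then show ?thesis using uK by blast
qed


definition near :: "ctrl set \<Rightarrow> real \<Rightarrow> ctrl \<Rightarrow> ctrl \<Rightarrow> bool" where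
  "near J \<delta> u w \<longleftrightarrow> (\<forall>v\<in>J. \<bar>ipU w v - ipU u v\<bar> < \<delta>)"

definition wc :: "ctrl \<Rightarrow> (ctrl \<Rightarrow> real \<Rightarrow> real) \<Rightarrow> bool" where
  "wc u \<Psi> \<longleftrightarrow> (\<forall>e>0. \<exists>J \<delta>. finite J \<and> J \<subseteq> U_space \<and> 0 < \<delta> \<and>
      (\<forall>w\<in>K2. near J \<delta> u w \<longrightarrow> (\<forall>r\<in>II. \<bar>\<Psi> w r - \<Psi> u r\<bar> < e)))"

lemma near_mono: "near J \<delta> u w \<Longrightarrow> J' \<subseteq> J \<Longrightarrow> \<delta> \<le> \<delta>' \<Longrightarrow> near J' \<delta>' u w"
  unfolding near_def by fastforce

lemma wcD:
  assumes "wc u \<Psi>" "0 < e"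
  obtains J \<delta> where "finite J" "J \<subseteq> U_space" "0 < \<delta>"
    "\<And>w r. w \<in> K2 \<Longrightarrow> near J \<delta> u w \<Longrightarrow> r \<in> II \<Longrightarrow> \<bar>\<Psi> w r - \<Psi> u r\<bar> < e"
  using assms unfolding wc_def by meson

lemma wc_ip: "v \<in> U_space \<Longrightarrow> wc u (\<lambda>w r. ipU w v)"
  unfolding wc_def near_def by (intro allI impI exI[of _ "{v}"]) auto

lemma wc_cong:
  assumes u: "u \<in> K2" and W: "wc u \<Psi>" and eq: "\<And>w r. w \<in> K2 \<Longrightarrow> r \<in> II \<Longrightarrow> \<Psi> w r = \<Psi>' w r"
  shows "wc u \<Psi>'"
  unfolding wc_def
proof (intro allI impI)
  fix e :: real assume e: "0 < e"
  obtain J \<delta> where J: "finite J" "J \<subseteq> U_space" "0 < \<delta>"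
    "\<And>w r. w \<in> K2 \<Longrightarrow> near J \<delta> u w \<Longrightarrow> r \<in> II \<Longrightarrow> \<bar>\<Psi> w r - \<Psi> u r\<bar> < e"
    using wcD[OF W e] by blast
  show "\<exists>J \<delta>. finite J \<and> J \<subseteq> U_space \<and> 0 < \<delta> \<and> (\<forall>w\<in>K2. near J \<delta> u w \<longrightarrow> (\<forall>r\<in>II. \<bar>\<Psi>' w r - \<Psi>' u r\<bar> < e))"
    using J eq u by (intro exI[of _ J] exI[of _ \<delta>]) (metis)
qed

lemma wc_affine:
  assumes W: "wc u \<Psi>"
  shows "wc u (\<lambda>w r. a * \<Psi> w r + b)"
  unfolding wc_def
proof (intro allI impI)
  fix e :: real assume e: "0 < e"
  define e' where "e' = e / (\<bar>a\<bar> + 1)"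
  have e': "0 < e'" using e by (simp add: e'_def)
  obtain J \<delta> where J: "finite J" "J \<subseteq> U_space" "0 < \<delta>"
    "\<And>w r. w \<in> K2 \<Longrightarrow> near J \<delta> u w \<Longrightarrow> r \<in> II \<Longrightarrow> \<bar>\<Psi> w r - \<Psi> u r\<bar> < e'"
    using wcD[OF W e'] by blast
  have "\<bar>(a * \<Psi> w r + b) - (a * \<Psi> u r + b)\<bar> < e" if "w \<in> K2" "near J \<delta> u w" "r \<in> II" for w r
  proof -
    have "\<bar>(a * \<Psi> w r + b) - (a * \<Psi> u r + b)\<bar> = \<bar>a\<bar> * \<bar>\<Psi> w r - \<Psi> u r\<bar>"
      by (simp add: abs_mult[symmetric] algebra_simps)
    also have "\<dots> \<le> \<bar>a\<bar> * e'" using J(4)[OF that] by (simp add: mult_left_mono less_imp_le)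
    also have "\<dots> < e" unfolding e'_def using e by (simp add: field_simps)
    finally show ?thesis .
  qed
  then show "\<exists>J \<delta>. finite J \<and> J \<subseteq> U_space \<and> 0 < \<delta> \<and> (\<forall>w\<in>K2. near J \<delta> u w \<longrightarrow>
      (\<forall>r\<in>II. \<bar>(a * \<Psi> w r + b) - (a * \<Psi> u r + b)\<bar> < e))"
    using J by blast
qed

lemma wc_at:
  assumes "wc u \<Psi>" "r0 \<in> II"
  shows "wc u (\<lambda>w r. \<Psi> w r0)"
  using assms unfolding wc_def by fast

lemma grid_exists:
  fixes T r :: real and N :: nat
  assumes "0 < T" "0 < N" "0 \<le> r" "r \<le> T"
  shows "\<exists>j\<le>N. \<bar>r - T * real j / real N\<bar> \<le> T / real N"
proof -
  define x where "x = r * real N / T"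
  have x0: "0 \<le> x" and xN: "x \<le> real N" using assms by (auto simp: x_def field_simps)
  define j where "j = nat \<lfloor>x\<rfloor>"
  have fl0: "0 \<le> \<lfloor>x\<rfloor>" using x0 by simp
  have jx: "real j = of_int \<lfloor>x\<rfloor>" using fl0 by (simp add: j_def)
  have j1: "real j \<le> x" "x < real j + 1" using jx by linarith+
  have jN: "j \<le> N" using j1(1) xN by linarith
  have "r - T * real j / real N = (T / real N) * (x - real j)"
    using assms by (simp add: x_def field_simps)
  moreover have "\<bar>x - real j\<bar> \<le> 1" using j1 by linarith
  moreover have "0 < T / real N" using assms by simp
  moreover have "\<bar>T\<bar> = T" using assms(1) by simp
  ultimately have "\<bar>r - T * real j / real N\<bar> = (T / real N) * \<bar>x - real j\<bar>"
    by (simp add: abs_mult)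
  also have "\<dots> \<le> T / real N * 1"
    using \<open>\<bar>x - real j\<bar> \<le> 1\<close> \<open>0 < T / real N\<close> by (intro mult_left_mono) auto
  finally have "\<bar>r - T * real j / real N\<bar> \<le> T / real N * 1" .
  then show ?thesis using jN by auto
qed

lemma wc_grid:
  assumes pt: "\<And>r. r \<in> II \<Longrightarrow> wc u (\<lambda>w _. \<Psi> w r)"
    and M: "0 \<le> M" and u: "u \<in> K2"
    and lip: "\<And>w r r'. w \<in> K2 \<Longrightarrow> r \<in> II \<Longrightarrow> r' \<in> II \<Longrightarrow> \<bar>\<Psi> w r - \<Psi> w r'\<bar> \<le> M * \<bar>r - r'\<bar>"
  shows "wc u \<Psi>"
  unfolding wc_def
proof (intro allI impI)
  fix e :: real assume e: "0 < e"
  define M' where "M' = M + 1"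
  have M': "0 < M'" using M by (simp add: M'_def)
  define N :: nat where "N = nat \<lceil>4 * M' * T_hor / e\<rceil> + 1"
  have N0: "0 < N" by (simp add: N_def)
  have "4 * M' * T_hor / e \<le> real N" unfolding N_def by linarith
  then have TN: "T_hor / real N \<le> e / (4 * M')" using e M' N0 by (simp add: field_simps)
  define gr where "gr = (\<lambda>j::nat. T_hor * real j / real N)"
  have grII: "gr j \<in> II" if "j \<le> N" for j
    using that N0 by (auto simp: gr_def field_simps)
  have "\<forall>j\<in>{..N}. \<exists>p. finite (fst p) \<and> fst p \<subseteq> U_space \<and> 0 < snd p \<and>
      (\<forall>w\<in>K2. near (fst p) (snd p) u w \<longrightarrow> \<bar>\<Psi> w (gr j) - \<Psi> u (gr j)\<bar> < e / 2)"
  proof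
    fix j assume j: "j \<in> {..N}"
    have e2: "0 < e / 2" using e by simp
    obtain J \<delta> where J: "finite J" "J \<subseteq> U_space" "0 < \<delta>"
      "\<And>w r. w \<in> K2 \<Longrightarrow> near J \<delta> u w \<Longrightarrow> r \<in> II \<Longrightarrow> \<bar>\<Psi> w (gr j) - \<Psi> u (gr j)\<bar> < e / 2"
      using wcD[OF pt[OF grII] e2, of j] j by auto
    have "0 \<in> II" by simp
    then have "\<forall>w\<in>K2. near J \<delta> u w \<longrightarrow> \<bar>\<Psi> w (gr j) - \<Psi> u (gr j)\<bar> < e / 2" using J(4) by blast
    note A = this
    show "\<exists>p. finite (fst p) \<and> fst p \<subseteq> U_space \<and> 0 < snd p \<and>
      (\<forall>w\<in>K2. near (fst p) (snd p) u w \<longrightarrow> \<bar>\<Psi> w (gr j) - \<Psi> u (gr j)\<bar> < e / 2)"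
    proof (intro exI[of _ "(J, \<delta>)"] conjI)
      show "finite (fst (J, \<delta>))" using J(1) by simp
      show "fst (J, \<delta>) \<subseteq> U_space" using J(2) by simp
      show "0 < snd (J, \<delta>)" using J(3) by simp
      show "\<forall>w\<in>K2. near (fst (J, \<delta>)) (snd (J, \<delta>)) u w \<longrightarrow> \<bar>\<Psi> w (gr j) - \<Psi> u (gr j)\<bar> < e / 2"
        unfolding fst_conv snd_conv by (rule A)
    qed
  qed
  then obtain p where p: "\<And>j. j \<in> {..N} \<Longrightarrow> finite (fst (p j)) \<and> fst (p j) \<subseteq> U_space \<and> 0 < snd (p j) \<and>
      (\<forall>w\<in>K2. near (fst (p j)) (snd (p j)) u w \<longrightarrow> \<bar>\<Psi> w (gr j) - \<Psi> u (gr j)\<bar> < e / 2)"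
    using bchoice[of "{..N}"] by metis
  define J where "J = (\<Union>j\<in>{..N}. fst (p j))"
  define \<delta> where "\<delta> = Min (snd ` p ` {..N})"
  have Jf: "finite J" unfolding J_def using p by auto
  have JU: "J \<subseteq> U_space" unfolding J_def using p by auto
  have d0: "0 < \<delta>" unfolding \<delta>_def using p by (subst Min_gr_iff) auto
  have "\<bar>\<Psi> w r - \<Psi> u r\<bar> < e" if w: "w \<in> K2" "near J \<delta> u w" and r: "r \<in> II" for w r
  proof -
    obtain j where j: "j \<le> N" "\<bar>r - gr j\<bar> \<le> T_hor / real N"
      using grid_exists[of T_hor N r] N0 r by (auto simp: gr_def)
    have "near (fst (p j)) (snd (p j)) u w"
      by (rule near_mono[OF w(2)]) (use j(1) in \<open>auto simp: J_def \<delta>_def intro!: Min_le\<close>)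
    then have c: "\<bar>\<Psi> w (gr j) - \<Psi> u (gr j)\<bar> < e / 2" using p[of j] j(1) w(1) by auto
    have l1: "\<bar>\<Psi> w r - \<Psi> w (gr j)\<bar> \<le> M * (T_hor / real N)"
      using lip[OF w(1) r grII[OF j(1)]] j(2) M by (meson mult_left_mono order_trans)
    have l2: "\<bar>\<Psi> u (gr j) - \<Psi> u r\<bar> \<le> M * (T_hor / real N)"
      using lip[OF u grII[OF j(1)] r] j(2) M by (metis abs_minus_commute mult_left_mono order_trans)
    have "M * (T_hor / real N) \<le> M' * (e / (4 * M'))"
      using TN M by (intro mult_mono) (auto simp: M'_def)
    also have "\<dots> = e / 4" using M' by simp
    finally have m: "M * (T_hor / real N) \<le> e / 4" .
    have "\<bar>\<Psi> w r - \<Psi> u r\<bar> \<le> \<bar>\<Psi> w r - \<Psi> w (gr j)\<bar> + \<bar>\<Psi> w (gr j) - \<Psi> u (gr j)\<bar> + \<bar>\<Psi> u (gr j) - \<Psi> u r\<bar>"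
      by linarith
    then show ?thesis using l1 l2 c m by linarith
  qed
  then show "\<exists>J \<delta>. finite J \<and> J \<subseteq> U_space \<and> 0 < \<delta> \<and> (\<forall>w\<in>K2. near J \<delta> u w \<longrightarrow> (\<forall>r\<in>II. \<bar>\<Psi> w r - \<Psi> u r\<bar> < e))"
    using Jf JU d0 by blast
qed

lemma wc_int:
  assumes u: "u \<in> K2" and W: "wc u \<Psi>" and int: "\<And>w. w \<in> K2 \<Longrightarrow> \<Psi> w integrable_on II"
  shows "wc u (\<lambda>w r. integral {0..r} (\<Psi> w))"
  unfolding wc_def
proof (intro allI impI)
  fix e :: real assume e: "0 < e"
  define e' where "e' = e / (2 * T_hor)"
  have e': "0 < e'" using e by (simp add: e'_def)
  obtain J \<delta> where J: "finite J" "J \<subseteq> U_space" "0 < \<delta>"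
    "\<And>w r. w \<in> K2 \<Longrightarrow> near J \<delta> u w \<Longrightarrow> r \<in> II \<Longrightarrow> \<bar>\<Psi> w r - \<Psi> u r\<bar> < e'"
    using wcD[OF W e'] by blast
  have "\<bar>integral {0..r} (\<Psi> w) - integral {0..r} (\<Psi> u)\<bar> < e" if w: "w \<in> K2" "near J \<delta> u w" and r: "r \<in> II" for w r
  proof -
    have sub: "{0..r} \<subseteq> II" using r by auto
    have iw: "\<Psi> w integrable_on {0..r}" by (rule integrable_on_subinterval[OF int[OF w(1)] sub])
    have iu: "\<Psi> u integrable_on {0..r}" by (rule integrable_on_subinterval[OF int[OF u] sub])
    have "integral {0..r} (\<Psi> w) - integral {0..r} (\<Psi> u) = integral {0..r} (\<lambda>s. \<Psi> w s - \<Psi> u s)"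
      by (rule integral_diff[symmetric, OF iw iu])
    moreover have B: "norm (integral {0..r} (\<lambda>s. \<Psi> w s - \<Psi> u s)) \<le> integral {0..r} (\<lambda>s. e')"
    proof (rule integral_norm_bound_integral[OF integrable_diff[OF iw iu]])
      show "(\<lambda>s. e') integrable_on {0..r}" by (rule has_integral_integrable[OF has_integral_const_real])
      fix s assume "s \<in> {0..r}"
      then show "norm (\<Psi> w s - \<Psi> u s) \<le> e'" using J(4)[OF w] sub by (auto simp: less_imp_le)
    qed
    moreover have C: "integral {0..r} (\<lambda>s. e') = r * e'" using r by simp
    moreover have "r * e' \<le> T_hor * e'" using r e' by (simp add: mult_right_mono)
    moreover have "T_hor * e' < e" using e by (simp add: e'_def)
    ultimately show ?thesis by (metis real_norm_def order_le_less_trans)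
  qed
  then show "\<exists>J \<delta>. finite J \<and> J \<subseteq> U_space \<and> 0 < \<delta> \<and> (\<forall>w\<in>K2. near J \<delta> u w \<longrightarrow>
      (\<forall>r\<in>II. \<bar>integral {0..r} (\<Psi> w) - integral {0..r} (\<Psi> u)\<bar> < e))"
    using J by blast
qed

lemma int_lip:
  fixes f :: "real \<Rightarrow> real"
  assumes fi: "f integrable_on II" and N: "negligible N" and b: "\<And>t. t \<in> II - N \<Longrightarrow> \<bar>f t\<bar> \<le> M"
    and r: "r \<in> II" and r': "r' \<in> II"
  shows "\<bar>integral {0..r} f - integral {0..r'} f\<bar> \<le> M * \<bar>r - r'\<bar>"
proof -
  have main: "\<bar>integral {0..b} f - integral {0..a} f\<bar> \<le> M * (b - a)" if ab: "a \<le> b" "a \<in> II" "b \<in> II" for a b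
  proof -
    have fb: "f integrable_on {0..b}" by (rule integrable_on_subinterval[OF fi]) (use ab in auto)
    have "integral {0..a} f + integral {a..b} f = integral {0..b} f"
      by (rule Henstock_Kurzweil_Integration.integral_combine) (use ab fb in auto)
    moreover have "\<bar>integral {a..b} f\<bar> \<le> integral {a..b} (\<lambda>t. M)"
    proof (rule integral_ae_bound[OF N])
      show "f integrable_on {a..b}" by (rule integrable_on_subinterval[OF fi]) (use ab in auto)
      fix t assume "t \<in> {a..b} - N" then show "\<bar>f t\<bar> \<le> M" using b ab by auto
    qed (rule has_integral_integrable[OF has_integral_const_real])
    moreover have "integral {a..b} (\<lambda>t. M) = M * (b - a)" using ab by simp
    ultimately show ?thesis by (simp add: algebra_simps)
  qed
  show ?thesis
  proof (cases "r \<le> r'")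
    case True then show ?thesis using main[OF True r r'] by (simp add: abs_minus_commute)
  next
    case False then show ?thesis using main[of r' r] r r' by simp
  qed
qed


lemma cos_lip: "\<bar>cos x - cos y\<bar> \<le> \<bar>x - y\<bar>" for x y :: real
proof -
  have "\<bar>cos x - cos y\<bar> = 2 * \<bar>sin ((x + y) / 2)\<bar> * \<bar>sin ((y - x) / 2)\<bar>"
    by (simp add: cos_diff_cos abs_mult)
  also have "\<dots> \<le> 2 * 1 * \<bar>(y - x) / 2\<bar>"
    by (intro mult_mono abs_sin_x_le_abs_x) (auto simp: abs_sin_le_one)
  finally show ?thesis by (simp add: abs_minus_commute)
qed

lemma sin_lip: "\<bar>sin x - sin y\<bar> \<le> \<bar>x - y\<bar>" for x y :: real
proof -
  have "\<bar>sin x - sin y\<bar> = 2 * \<bar>sin ((x - y) / 2)\<bar> * \<bar>cos ((x + y) / 2)\<bar>"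
    by (simp add: sin_diff_sin abs_mult)
  also have "\<dots> \<le> 2 * \<bar>(x - y) / 2\<bar> * 1"
    by (intro mult_mono abs_sin_x_le_abs_x) (auto simp: abs_cos_le_one)
  finally show ?thesis by simp
qed

definition PP :: "ctrl \<Rightarrow> real \<Rightarrow> real" where
  "PP w r = integral {0..r} (\<lambda>s. fst w s - snd w s)"

definition QQ :: "(real \<Rightarrow> real) \<Rightarrow> ctrl \<Rightarrow> real \<Rightarrow> real" where
  "QQ trig w r = integral {0..r} (\<lambda>s. (fst w s + snd w s) * trig (G3 w s))"

lemma G3_PP: "G3 w t = pi/2 + 0.2 * integral {0..t} (PP w)"
  by (simp add: G3_def PP_def[abs_def])

lemma a_int: "w \<in> U_space \<Longrightarrow> (\<lambda>s. fst w s - snd w s) integrable_on II"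
  by (auto simp: U_iff intro: sq_int_int sq_int_diff)

lemma b_int: "w \<in> U_space \<Longrightarrow> (\<lambda>s. fst w s + snd w s) absolutely_integrable_on II"
  by (auto simp: U_iff intro: sq_int_absint sq_int_add)

lemma PP_cont: "w \<in> U_space \<Longrightarrow> continuous_on II (PP w)"
  unfolding PP_def[abs_def] by (rule indefinite_integral_continuous_1[OF a_int])

lemma PP_int: "w \<in> U_space \<Longrightarrow> PP w integrable_on II"
  by (rule integrable_continuous_interval[OF PP_cont])

lemma G3_cont: "w \<in> U_space \<Longrightarrow> continuous_on II (G3 w)"
proof -
  assume w: "w \<in> U_space"
  have "continuous_on II (\<lambda>t. integral {0..t} (PP w))" by (rule indefinite_integral_continuous_1[OF PP_int[OF w]])
  then have "continuous_on II (\<lambda>t. pi/2 + 0.2 * integral {0..t} (PP w))" by (intro continuous_intros)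
  then show ?thesis unfolding G3_PP[abs_def] .
qed

lemma b_phi_int:
  assumes w: "w \<in> U_space" and phi: "continuous_on II phi" and bd: "\<And>t. t \<in> II \<Longrightarrow> \<bar>phi t\<bar> \<le> B"
  shows "(\<lambda>s. (fst w s + snd w s) * phi s) integrable_on II"
proof -
  have m: "phi \<in> borel_measurable (lebesgue_on II)"
    by (rule continuous_imp_measurable_on_sets_lebesgue[OF phi II_sets])
  have bo: "bounded (phi ` II)" unfolding bounded_iff using bd by (intro exI[of _ B]) auto
  have "(\<lambda>s. phi s * (fst w s + snd w s)) absolutely_integrable_on II"
    by (rule absolutely_integrable_bounded_measurable_product_real[OF m II_sets bo b_int[OF w]])
  then have "(\<lambda>s. phi s * (fst w s + snd w s)) integrable_on II"
    using set_lebesgue_integral_eq_integral(1) by blast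
  then show ?thesis by (simp add: mult.commute)
qed

locale trigfun =
  fixes trig :: "real \<Rightarrow> real"
  assumes tc: "continuous_on UNIV trig" and tb: "\<And>x. \<bar>trig x\<bar> \<le> 1"
    and tl: "\<And>x y. \<bar>trig x - trig y\<bar> \<le> \<bar>x - y\<bar>"
begin

lemma tG_cont: "w \<in> U_space \<Longrightarrow> continuous_on II (\<lambda>s. trig (G3 w s))"
  by (rule continuous_on_compose2[OF tc G3_cont]) auto

lemma QQ_integrand_int: "w \<in> U_space \<Longrightarrow> (\<lambda>s. (fst w s + snd w s) * trig (G3 w s)) integrable_on II"
  by (rule b_phi_int[OF _ tG_cont tb])

lemma QQ_cont: "w \<in> U_space \<Longrightarrow> continuous_on II (QQ trig w)"
  unfolding QQ_def[abs_def] by (rule indefinite_integral_continuous_1[OF QQ_integrand_int])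

lemma QQ_int: "w \<in> U_space \<Longrightarrow> QQ trig w integrable_on II"
  by (rule integrable_continuous_interval[OF QQ_cont])

end

interpretation tcos: trigfun cos
  by unfold_locales (auto intro: continuous_intros cos_lip simp: abs_cos_le_one)

interpretation tsin: trigfun sin
  by unfold_locales (auto intro: continuous_intros sin_lip simp: abs_sin_le_one)

lemma K2_ab:
  assumes "w \<in> K2"
  obtains N where "negligible N" "\<And>t. t \<in> II - N \<Longrightarrow> \<bar>fst w t - snd w t\<bar> \<le> 1.2 \<and> \<bar>fst w t + snd w t\<bar> \<le> 1.2"
proof -
  obtain N where N: "negligible N" "\<And>t. t \<in> II - N \<Longrightarrow> \<bar>fst w t\<bar> \<le> 0.8 \<and> \<bar>snd w t\<bar> \<le> 0.4"
    using K2_ae[OF assms] by blast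
  have "\<bar>fst w t - snd w t\<bar> \<le> 1.2 \<and> \<bar>fst w t + snd w t\<bar> \<le> 1.2" if "t \<in> II - N" for t
    using N(2)[OF that] by linarith
  then show ?thesis using N(1) that by blast
qed

lemma ind_meas: "(\<lambda>t. indicator {0..r} t :: real) \<in> borel_measurable (lebesgue_on II)"
  by (rule measurable_restrict_space1) (rule borel_measurable_indicator, simp)

lemma test_P_U: "(\<lambda>t. indicator {0..r} t, \<lambda>t. - indicator {0..r} t) \<in> U_space"
  unfolding U_iff using sq_int_indicator[of "{0..r}"] sq_int_cmult[of "indicator {0..r}" "-1"] by simp

lemma ip_test_P: "r \<in> II \<Longrightarrow> ipU w (\<lambda>t. indicator {0..r} t, \<lambda>t. - indicator {0..r} t) = PP w r"
proof -
  assume r: "r \<in> II"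
  have "ipU w (\<lambda>t. indicator {0..r} t, \<lambda>t. - indicator {0..r} t) =
      integral II (\<lambda>t. if t \<in> {0..r} then fst w t - snd w t else 0)"
    unfolding ipU_def by (rule integral_cong) (auto simp: indicator_def)
  also have "\<dots> = integral ({0..r} \<inter> II) (\<lambda>t. fst w t - snd w t)"
    by (rule Henstock_Kurzweil_Integration.integral_restrict_Int)
  also have "{0..r} \<inter> II = {0..r}" using r by auto
  finally show ?thesis by (simp add: PP_def)
qed

lemma W_P:
  assumes u: "u \<in> K2"
  shows "wc u PP"
proof (rule wc_grid[where M="1.2"])
  fix r assume r: "r \<in> II"
  show "wc u (\<lambda>w _. PP w r)"
    by (rule wc_cong[OF u wc_ip[OF test_P_U[of r]]]) (simp add: ip_test_P[OF r])
next
  fix w r r' assume w: "w \<in> K2" and r: "r \<in> II" and r': "r' \<in> II"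
  obtain N where N: "negligible N" "\<And>t. t \<in> II - N \<Longrightarrow> \<bar>fst w t - snd w t\<bar> \<le> 1.2 \<and> \<bar>fst w t + snd w t\<bar> \<le> 1.2"
    using K2_ab[OF w] by blast
  show "\<bar>PP w r - PP w r'\<bar> \<le> 1.2 * \<bar>r - r'\<bar>"
    unfolding PP_def by (rule int_lip[OF a_int[OF K2_U[OF w]] N(1) _ r r']) (use N(2) in auto)
qed (use u in auto)

lemma W_G:
  assumes u: "u \<in> K2"
  shows "wc u G3"
proof -
  have "wc u (\<lambda>w r. 0.2 * integral {0..r} (PP w) + pi/2)"
    by (rule wc_affine[OF wc_int[OF u W_P[OF u] PP_int[OF K2_U]]])
  then show ?thesis by (rule wc_cong[OF u]) (simp add: G3_PP)
qed

context trigfun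
begin

lemma test_Q_U:
  assumes u: "u \<in> U_space"
  shows "(\<lambda>t. indicator {0..r} t * trig (G3 u t), \<lambda>t. indicator {0..r} t * trig (G3 u t)) \<in> U_space"
proof -
  have m: "(\<lambda>t. indicator {0..r} t * trig (G3 u t)) \<in> borel_measurable (lebesgue_on II)"
    using ind_meas continuous_imp_measurable_on_sets_lebesgue[OF tG_cont[OF u] II_sets]
    by (rule borel_measurable_times)
  have "sq_int (\<lambda>t. indicator {0..r} t * trig (G3 u t))"
  proof (rule sq_int_bounded[OF m])
    fix t show "\<bar>indicator {0..r} t * trig (G3 u t)\<bar> \<le> 1"
      using tb[of "G3 u t"] by (auto simp: indicator_def)
  qed
  then show ?thesis by (simp add: U_iff)
qed

lemma ip_test_Q:
  assumes r: "r \<in> II"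
  shows "ipU w (\<lambda>t. indicator {0..r} t * trig (G3 u t), \<lambda>t. indicator {0..r} t * trig (G3 u t)) =
     integral {0..r} (\<lambda>s. (fst w s + snd w s) * trig (G3 u s))"
proof -
  have "ipU w (\<lambda>t. indicator {0..r} t * trig (G3 u t), \<lambda>t. indicator {0..r} t * trig (G3 u t)) =
      integral II (\<lambda>t. if t \<in> {0..r} then (fst w t + snd w t) * trig (G3 u t) else 0)"
    unfolding ipU_def by (rule integral_cong) (auto simp: indicator_def algebra_simps)
  also have "\<dots> = integral ({0..r} \<inter> II) (\<lambda>s. (fst w s + snd w s) * trig (G3 u s))"
    by (rule Henstock_Kurzweil_Integration.integral_restrict_Int)
  also have "{0..r} \<inter> II = {0..r}" using r by auto
  finally show ?thesis .
qed

lemma W_Q: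
  assumes u: "u \<in> K2"
  shows "wc u (QQ trig)"
proof (rule wc_grid[where M="1.2"])
  fix r assume r: "r \<in> II"
  have uU: "u \<in> U_space" by (rule K2_U[OF u])
  define c where "c = (\<lambda>t. indicator {0..r} t * trig (G3 u t), \<lambda>t. indicator {0..r} t * trig (G3 u t))"
  have cU: "c \<in> U_space" unfolding c_def by (rule test_Q_U[OF uU])
  show "wc u (\<lambda>w _. QQ trig w r)"
    unfolding wc_def
  proof (intro allI impI)
    fix e :: real assume e: "0 < e"
    define e1 where "e1 = e / (2 * (1.2 * T_hor + 1))"
    have den: "0 < 2 * (1.2 * T_hor + 1)" using T_pos(2) by (simp add: T_hor_def)
    have e1: "0 < e1" unfolding e1_def using e den by (rule divide_pos_pos)
    obtain J \<delta> where J: "finite J" "J \<subseteq> U_space" "0 < \<delta>"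
      "\<And>w s. w \<in> K2 \<Longrightarrow> near J \<delta> u w \<Longrightarrow> s \<in> II \<Longrightarrow> \<bar>G3 w s - G3 u s\<bar> < e1"
      using wcD[OF W_G[OF u] e1] by blast
    have main: "\<bar>QQ trig w r - QQ trig u r\<bar> < e" if w: "w \<in> K2" "near (insert c J) (min \<delta> (e/2)) u w" for w
    proof -
      have wU: "w \<in> U_space" by (rule K2_U[OF w(1)])
      have nJ: "near J \<delta> u w" by (rule near_mono[OF w(2)]) auto
      have nc: "\<bar>ipU w c - ipU u c\<bar> < e/2" using w(2) unfolding near_def by auto
      have sub: "{0..r} \<subseteq> II" using r by auto
      define d where "d = (\<lambda>s. trig (G3 w s) - trig (G3 u s))"
      have dc: "continuous_on II d" unfolding d_def by (intro continuous_intros tG_cont wU uU)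
      have db: "\<bar>d t\<bar> \<le> 2" for t unfolding d_def using tb[of "G3 w t"] tb[of "G3 u t"] by linarith
      have i1: "(\<lambda>s. (fst w s + snd w s) * trig (G3 u s)) integrable_on {0..r}"
        by (rule integrable_on_subinterval[OF b_phi_int[OF wU tG_cont[OF uU] tb] sub])
      have i2: "(\<lambda>s. (fst w s + snd w s) * d s) integrable_on {0..r}"
        by (rule integrable_on_subinterval[OF b_phi_int[OF wU dc db] sub])
      have "QQ trig w r = integral {0..r} (\<lambda>s. (fst w s + snd w s) * trig (G3 u s) + (fst w s + snd w s) * d s)"
        unfolding QQ_def d_def by (rule integral_cong) (simp add: algebra_simps)
      also have "\<dots> = ipU w c + integral {0..r} (\<lambda>s. (fst w s + snd w s) * d s)"
        unfolding c_def ip_test_Q[OF r] by (rule integral_add[OF i1 i2])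
      finally have qw: "QQ trig w r = ipU w c + integral {0..r} (\<lambda>s. (fst w s + snd w s) * d s)" .
      have qu: "QQ trig u r = ipU u c" unfolding c_def ip_test_Q[OF r] QQ_def ..
      obtain N where N: "negligible N" "\<And>t. t \<in> II - N \<Longrightarrow> \<bar>fst w t - snd w t\<bar> \<le> 1.2 \<and> \<bar>fst w t + snd w t\<bar> \<le> 1.2"
        using K2_ab[OF w(1)] by blast
      have "\<bar>integral {0..r} (\<lambda>s. (fst w s + snd w s) * d s)\<bar> \<le> integral {0..r} (\<lambda>s. 1.2 * e1)"
      proof (rule integral_ae_bound[OF N(1) _ i2])
        show "(\<lambda>s. 1.2 * e1) integrable_on {0..r}" by (rule has_integral_integrable[OF has_integral_const_real])
        fix s assume s: "s \<in> {0..r} - N"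
        then have sII: "s \<in> II - N" using sub by auto
        have "\<bar>d s\<bar> \<le> e1" unfolding d_def
          using tl[of "G3 w s" "G3 u s"] J(4)[OF w(1) nJ, of s] sII by auto
        moreover have bb: "\<bar>fst w s + snd w s\<bar> \<le> 1.2" using N(2)[OF sII] by simp
        ultimately show "\<bar>(fst w s + snd w s) * d s\<bar> \<le> 1.2 * e1"
          unfolding abs_mult by (intro mult_mono) auto
      qed
      also have "\<dots> = r * (1.2 * e1)" using r by simp
      also have "\<dots> \<le> T_hor * (1.2 * e1)" using r e1 by (intro mult_right_mono) auto
      also have "\<dots> < e / 2"
      proof -
        have "T_hor * (1.2 * e1) = e / 2 * (1.2 * T_hor / (1.2 * T_hor + 1))"
          using den by (simp add: e1_def field_simps)
        also have "\<dots> < e / 2 * 1"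
          using e T_pos by (intro mult_strict_left_mono) (auto simp: T_hor_def)
        finally show ?thesis by simp
      qed
      finally have "\<bar>integral {0..r} (\<lambda>s. (fst w s + snd w s) * d s)\<bar> < e / 2" .
      then show ?thesis using qw qu nc by linarith
    qed
    show "\<exists>J \<delta>. finite J \<and> J \<subseteq> U_space \<and> 0 < \<delta> \<and> (\<forall>w\<in>K2. near J \<delta> u w \<longrightarrow> (\<forall>r'\<in>II. \<bar>QQ trig w r - QQ trig u r\<bar> < e))"
      using J cU e main by (intro exI[of _ "insert c J"] exI[of _ "min \<delta> (e/2)"]) auto
  qed
next
  fix w r r' assume w: "w \<in> K2" and r: "r \<in> II" and r': "r' \<in> II"
  obtain N where N: "negligible N" "\<And>t. t \<in> II - N \<Longrightarrow> \<bar>fst w t - snd w t\<bar> \<le> 1.2 \<and> \<bar>fst w t + snd w t\<bar> \<le> 1.2"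
    using K2_ab[OF w] by blast
  show "\<bar>QQ trig w r - QQ trig w r'\<bar> \<le> 1.2 * \<bar>r - r'\<bar>"
    unfolding QQ_def
  proof (rule int_lip[OF QQ_integrand_int[OF K2_U[OF w]] N(1) _ r r'])
    fix t assume "t \<in> II - N"
    then show "\<bar>(fst w t + snd w t) * trig (G3 w t)\<bar> \<le> 1.2"
    proof -
      have "\<bar>fst w t + snd w t\<bar> \<le> 1.2" using N(2) \<open>t \<in> II - N\<close> by simp
      then have "\<bar>fst w t + snd w t\<bar> * \<bar>trig (G3 w t)\<bar> \<le> 1.2 * 1"
        using tb[of "G3 w t"] by (intro mult_mono) auto
      then show ?thesis by (simp add: abs_mult)
    qed
  qed
qed (use assms in auto)

end


lemma TII: "T_hor \<in> II" by simp

lemma h_nth: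
  "h_map w $ 1 = -10 + integral {0..T_hor} (QQ cos w)"
  "h_map w $ 2 = -10 + integral {0..T_hor} (QQ sin w)"
  "h_map w $ 3 = G3 w T_hor"
  "h_map w $ 4 = QQ cos w T_hor"
  "h_map w $ 5 = QQ sin w T_hor"
  "h_map w $ 6 = 0.2 * PP w T_hor"
  unfolding h_map_def vector6_nth QQ_def[abs_def] PP_def by (rule refl)+

lemma h_comp_wc:
  assumes u: "u \<in> K2"
  shows "wc u (\<lambda>w r. h_map w $ k)"
proof -
  have uU: "\<And>w. w \<in> K2 \<Longrightarrow> w \<in> U_space" by (rule K2_U)
  have f1: "wc u (\<lambda>w r. 1 * integral {0..T_hor} (QQ cos w) + (-10))"
    by (rule wc_affine[OF wc_at[OF wc_int[OF u tcos.W_Q[OF u] tcos.QQ_int[OF uU]] TII]])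
  have f2: "wc u (\<lambda>w r. 1 * integral {0..T_hor} (QQ sin w) + (-10))"
    by (rule wc_affine[OF wc_at[OF wc_int[OF u tsin.W_Q[OF u] tsin.QQ_int[OF uU]] TII]])
  have f3: "wc u (\<lambda>w r. G3 w T_hor)" by (rule wc_at[OF W_G[OF u] TII])
  have f4: "wc u (\<lambda>w r. QQ cos w T_hor)" by (rule wc_at[OF tcos.W_Q[OF u] TII])
  have f5: "wc u (\<lambda>w r. QQ sin w T_hor)" by (rule wc_at[OF tsin.W_Q[OF u] TII])
  have f6: "wc u (\<lambda>w r. 0.2 * PP w T_hor + 0)" by (rule wc_affine[OF wc_at[OF W_P[OF u] TII]])
  consider "k = 1" | "k = 2" | "k = 3" | "k = 4" | "k = 5" | "k = 6" using exhaust_6[of k] by blast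
  then show ?thesis
  proof cases
    case 1 show ?thesis by (rule wc_cong[OF u f1]) (simp add: 1 h_nth)
  next
    case 2 show ?thesis by (rule wc_cong[OF u f2]) (simp add: 2 h_nth)
  next
    case 3 show ?thesis by (rule wc_cong[OF u f3]) (simp add: 3 h_nth)
  next
    case 4 show ?thesis by (rule wc_cong[OF u f4]) (simp add: 4 h_nth)
  next
    case 5 show ?thesis by (rule wc_cong[OF u f5]) (simp add: 5 h_nth)
  next
    case 6 show ?thesis by (rule wc_cong[OF u f6]) (simp add: 6 h_nth)
  qed
qed

lemma h_cont:
  assumes u: "u \<in> K2" and e: "0 < e"
  shows "\<exists>J \<delta>. finite J \<and> J \<subseteq> U_space \<and> 0 < \<delta> \<and>
     (\<forall>w\<in>K2. near J \<delta> u w \<longrightarrow> (\<forall>k. \<bar>h_map w $ k - h_map u $ k\<bar> < e))"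
proof -
  have "\<forall>k\<in>(UNIV::6 set). \<exists>p. finite (fst p) \<and> fst p \<subseteq> U_space \<and> 0 < snd p \<and>
      (\<forall>w\<in>K2. near (fst p) (snd p) u w \<longrightarrow> \<bar>h_map w $ k - h_map u $ k\<bar> < e)"
  proof
    fix k :: 6
    obtain J \<delta> where J: "finite J" "J \<subseteq> U_space" "0 < \<delta>"
      "\<And>w r. w \<in> K2 \<Longrightarrow> near J \<delta> u w \<Longrightarrow> r \<in> II \<Longrightarrow> \<bar>h_map w $ k - h_map u $ k\<bar> < e"
      using wcD[OF h_comp_wc[OF u] e] by blast
    have "0 \<in> II" by simp
    then have A: "\<forall>w\<in>K2. near J \<delta> u w \<longrightarrow> \<bar>h_map w $ k - h_map u $ k\<bar> < e" using J(4) by blast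
    show "\<exists>p. finite (fst p) \<and> fst p \<subseteq> U_space \<and> 0 < snd p \<and>
      (\<forall>w\<in>K2. near (fst p) (snd p) u w \<longrightarrow> \<bar>h_map w $ k - h_map u $ k\<bar> < e)"
    proof (intro exI[of _ "(J, \<delta>)"] conjI)
      show "finite (fst (J, \<delta>))" using J(1) by simp
      show "fst (J, \<delta>) \<subseteq> U_space" using J(2) by simp
      show "0 < snd (J, \<delta>)" using J(3) by simp
      show "\<forall>w\<in>K2. near (fst (J, \<delta>)) (snd (J, \<delta>)) u w \<longrightarrow> \<bar>h_map w $ k - h_map u $ k\<bar> < e"
        unfolding fst_conv snd_conv by (rule A)
    qed
  qed
  then have "\<exists>p. \<forall>k\<in>(UNIV::6 set). finite (fst (p k)) \<and> fst (p k) \<subseteq> U_space \<and> 0 < snd (p k) \<and>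
      (\<forall>w\<in>K2. near (fst (p k)) (snd (p k)) u w \<longrightarrow> \<bar>h_map w $ k - h_map u $ k\<bar> < e)"
    by (rule bchoice)
  then obtain p where p0: "\<forall>k\<in>(UNIV::6 set). finite (fst (p k)) \<and> fst (p k) \<subseteq> U_space \<and> 0 < snd (p k) \<and>
      (\<forall>w\<in>K2. near (fst (p k)) (snd (p k)) u w \<longrightarrow> \<bar>h_map w $ k - h_map u $ k\<bar> < e)" ..
  have p: "finite (fst (p k)) \<and> fst (p k) \<subseteq> U_space \<and> 0 < snd (p k) \<and>
      (\<forall>w\<in>K2. near (fst (p k)) (snd (p k)) u w \<longrightarrow> \<bar>h_map w $ k - h_map u $ k\<bar> < e)" for k
    using p0 by (rule bspec) simp
  define J where "J = (\<Union>k. fst (p k))"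
  define \<delta> where "\<delta> = Min (range (\<lambda>k. snd (p k)))"
  have Jf: "finite J" unfolding J_def using p by auto
  have JU: "J \<subseteq> U_space" unfolding J_def using p by auto
  have d0: "0 < \<delta>" unfolding \<delta>_def using p by (subst Min_gr_iff) auto
  have "\<bar>h_map w $ k - h_map u $ k\<bar> < e" if w: "w \<in> K2" "near J \<delta> u w" for w k
  proof -
    have "near (fst (p k)) (snd (p k)) u w"
      by (rule near_mono[OF w(2)]) (auto simp: J_def \<delta>_def intro!: Min_le)
    then show ?thesis using p[of k] w(1) by auto
  qed
  then show ?thesis using Jf JU d0 by blast
qed

theorem lemma6p2:
  fixes z :: "real^6"
  shows "compactin weak_topU {u \<in> K2. h_map u = z} \<and> closedin weak_topU {u \<in> K2. h_map u = z}"
proof -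
  let ?S = "{u \<in> K2. h_map u = z}"
  have "compactin (pullback_topology U_space (\<lambda>u. restrict (\<lambda>v. ipU u v) U_space) (product_topology (\<lambda>_. euclideanreal) U_space)) ?S
      \<and> closedin (pullback_topology U_space (\<lambda>u. restrict (\<lambda>v. ipU u v) U_space) (product_topology (\<lambda>_. euclideanreal) U_space)) ?S"
  proof (rule abstract_weak_compact[where B = "\<lambda>v. integral II (\<lambda>t. \<bar>fst v t\<bar> + \<bar>snd v t\<bar>)"])
    show "?S \<subseteq> U_space" using K2_U by auto
  next
    fix u v assume "u \<in> ?S" "v \<in> U_space"
    then show "\<bar>ipU u v\<bar> \<le> integral II (\<lambda>t. \<bar>fst v t\<bar> + \<bar>snd v t\<bar>)" using ip_bound by auto
  next
    fix L :: "ctrl \<Rightarrow> real"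
    assume P: "\<And>J e. finite J \<Longrightarrow> J \<subseteq> U_space \<Longrightarrow> 0 < e \<Longrightarrow> \<exists>w\<in>?S. \<forall>v\<in>J. \<bar>ipU w v - L v\<bar> < e"
    obtain u where u: "u \<in> K2" and uL: "\<forall>v\<in>U_space. ipU u v = L v"
      using closure_rep[of ?S L] P by blast
    have "h_map u $ k = z $ k" for k
    proof -
      have "z $ k - h_map u $ k = 0"
      proof (rule small_zero[where K=1])
        fix e :: real assume e: "0 < e"
        obtain J \<delta> where J: "finite J" "J \<subseteq> U_space" "0 < \<delta>"
          "\<forall>w\<in>K2. near J \<delta> u w \<longrightarrow> (\<forall>k. \<bar>h_map w $ k - h_map u $ k\<bar> < e)"
          using h_cont[OF u e] by blast
        obtain w where w: "w \<in> ?S" "\<forall>v\<in>J. \<bar>ipU w v - L v\<bar> < \<delta>" using P[OF J(1,2,3)] by blast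
        have "near J \<delta> u w" unfolding near_def using w(2) uL J(2) by auto
        then have "\<bar>h_map w $ k - h_map u $ k\<bar> < e" using J(4) w(1) by blast
        then show "\<bar>z $ k - h_map u $ k\<bar> \<le> 1 * e" using w(1) by simp
      qed simp
      then show ?thesis by simp
    qed
    then have "h_map u = z" by (simp add: vec_eq_iff)
    then show "\<exists>u\<in>?S. \<forall>v\<in>U_space. ipU u v = L v" using u uL by blast
  next
    fix x u assume x: "x \<in> U_space" and u: "u \<in> ?S" and eq: "\<forall>v\<in>U_space. ipU x v = ipU u v"
    then show "x \<in> ?S" using saturation[OF x _ eq] by auto
  qed
  then show ?thesis unfolding weak_topU_def .
qed


end
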